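(* The elements $x_n$ and $y_n$, $n\geq 0$, generate $F_\tau$.
   Context: Let $\tau=(\sqrt5-1)/2$. $F_\tau$ is the group, under composition, of orientation-preserving piecewise linear homeomorphisms of $[0,1]$ with finitely many breakpoints, all in $\mathbb{Z}[\tau]$, and slopes integer powers of $\tau$. Trees: finite rooted binary trees whose carets (non-leaf vertex with its two children) are each labelled $x$-type or $y$-type; the root corresponds to $[0,1]$, and at a vertex with interval $[p,p+\tau^k]$ an $x$-type caret gives children $[p,p+\tau^{k+2}]$, $[p+\tau^{k+2},p+\tau^k]$ while a $y$-type caret gives $[p,p+\tau^{k+1}]$, $[p+\tau^{k+1},p+\tau^k]$ (left, right). Leaves are numbered $0,1,\dots$ from left to right; a pair $(T_1,T_2)$ with equally many leaves represents the element mapping the $i$-th leaf interval of $T_1$ affinely increasingly onto that of $T_2$. A spine is a tree with only $x$-type carets, each non-root caret being the right child of its parent. $x_n$ ($n\ge0$) is represented by $(A,B)$, $B$ the spine with $n+2$ carets, $A$ the spine with $n+1$ carets with an $x$-type caret attached to leaf $n$; $y_n$ likewise with a $y$-type attached caret. *)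

theory Defs
  imports Complex_Main
begin

definition tau :: real where "tau = (sqrt 5 - 1) / 2"

definition Ztau :: "real set" where
  "Ztau = {of_int a + of_int b * tau | a b. True}"

definition Ftau :: "(real \<Rightarrow> real) set" where
  "Ftau = {f. (\<forall>x. x \<notin> {0..1} \<longrightarrow> f x = x) \<and> f 0 = 0 \<and> f 1 = 1 \<and>
     (\<exists>ps :: real list. \<exists>es :: int list.
        length ps = length es + 1 \<and> hd ps = 0 \<and> last ps = 1 \<and>
        sorted_wrt (<) ps \<and> set ps \<subseteq> Ztau \<and>
        (\<forall>i < length es. \<forall>x \<in> {ps ! i .. ps ! (i+1)}.
            f x = f (ps ! i) + tau powi (es ! i) * (x - ps ! i)))}"

inductive_set generated :: "(real \<Rightarrow> real) set \<Rightarrow> (real \<Rightarrow> real) set"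
  for S :: "(real \<Rightarrow> real) set" where
  gen_id: "id \<in> generated S"
| gen_base: "s \<in> S \<Longrightarrow> s \<in> generated S"
| gen_comp: "f \<in> generated S \<Longrightarrow> g \<in> generated S \<Longrightarrow> f \<circ> g \<in> generated S"
| gen_inv: "f \<in> generated S \<Longrightarrow> inv f \<in> generated S"

datatype tree = Leaf | X tree tree | Y tree tree

fun nleaves :: "tree \<Rightarrow> nat" where
  "nleaves Leaf = 1"
| "nleaves (X l r) = nleaves l + nleaves r"
| "nleaves (Y l r) = nleaves l + nleaves r"

text \<open>Leaf intervals, left to right; a pair (p,k) stands for [p, p + tau^k].\<close>
fun leaf_intervals :: "tree \<Rightarrow> real \<Rightarrow> nat \<Rightarrow> (real \<times> nat) list" where
  "leaf_intervals Leaf p k = [(p, k)]"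
| "leaf_intervals (X l r) p k =
     leaf_intervals l p (k + 2) @ leaf_intervals r (p + tau ^ (k + 2)) (k + 1)"
| "leaf_intervals (Y l r) p k =
     leaf_intervals l p (k + 1) @ leaf_intervals r (p + tau ^ (k + 1)) (k + 2)"

fun apply_pl :: "(real \<times> nat) list \<Rightarrow> (real \<times> nat) list \<Rightarrow> real \<Rightarrow> real" where
  "apply_pl ((p, k) # xs) ((q, m) # ys) x =
     (if x \<le> p + tau ^ k then q + tau powi (int m - int k) * (x - p)
      else apply_pl xs ys x)"
| "apply_pl _ _ x = x"

definition tree_pair :: "tree \<Rightarrow> tree \<Rightarrow> real \<Rightarrow> real" where
  "tree_pair T1 T2 x =
     (if 0 \<le> x \<and> x \<le> 1
      then apply_pl (leaf_intervals T1 0 0) (leaf_intervals T2 0 0) x else x)"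

fun spine :: "nat \<Rightarrow> tree" where
  "spine 0 = Leaf"
| "spine (Suc n) = X Leaf (spine n)"

fun attach :: "tree \<Rightarrow> nat \<Rightarrow> tree \<Rightarrow> tree" where
  "attach c n Leaf = (if n = 0 then c else Leaf)"
| "attach c n (X l r) = (if n < nleaves l then X (attach c n l) r
                          else X l (attach c (n - nleaves l) r))"
| "attach c n (Y l r) = (if n < nleaves l then Y (attach c n l) r
                          else Y l (attach c (n - nleaves l) r))"

definition xgen :: "nat \<Rightarrow> real \<Rightarrow> real" where
  "xgen n = tree_pair (attach (X Leaf Leaf) n (spine (n + 1))) (spine (n + 2))"

definition ygen :: "nat \<Rightarrow> real \<Rightarrow> real" where
  "ygen n = tree_pair (attach (Y Leaf Leaf) n (spine (n + 1))) (spine (n + 2))"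

end

theory Submission
  imports Defs
begin


lemma sqrt5_sq: "sqrt 5 * sqrt 5 = (5::real)" by simp

lemma tau_sq: "tau * tau = 1 - tau"
  unfolding tau_def by (simp add: field_simps power2_eq_square)

lemma sqrt5_bounds: "2.2 < sqrt (5::real)" "sqrt (5::real) < 2.3"
  by (rule real_less_rsqrt, simp add: power2_eq_square, rule real_less_lsqrt, simp_all add: power2_eq_square)

lemma tau_bounds: "0.6 < tau" "tau < 0.65"
  using sqrt5_bounds unfolding tau_def by simp_all

lemma tau_pos: "0 < tau" using tau_bounds by simp
lemma tau_lt1: "tau < 1" using tau_bounds by simp
lemma tau_ne0: "tau \<noteq> 0" using tau_pos by simp

lemma int_eq_parity:
  fixes a b :: int
  assumes "a*a - a*b - b*b = 0" shows "even a \<and> even b"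
proof (rule ccontr)
  assume "\<not> (even a \<and> even b)"
  hence "odd (a*a - a*b - b*b)" by auto
  thus False using assms by simp
qed

lemma int_eq_zero:
  fixes a b :: int
  shows "a*a - a*b - b*b = 0 \<Longrightarrow> a = 0 \<and> b = 0"
proof (induction "nat (\<bar>a\<bar> + \<bar>b\<bar>)" arbitrary: a b rule: less_induct)
  case less
  from int_eq_parity[OF less.prems] obtain a' b' where ab: "a = 2*a'" "b = 2*b'"
    by (auto elim!: evenE)
  have eq: "a'*a' - a'*b' - b'*b' = 0" using less.prems ab by (simp add: algebra_simps)
  show ?case
  proof (cases "a = 0 \<and> b = 0")
    case True thus ?thesis by simp
  next
    case False
    hence "nat (\<bar>a'\<bar> + \<bar>b'\<bar>) < nat (\<bar>a\<bar> + \<bar>b\<bar>)" using ab by auto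
    from less.hyps[OF this eq] have "a' = 0 \<and> b' = 0" .
    thus ?thesis using ab by simp
  qed
qed

lemma tau_indep:
  fixes a b :: int
  assumes "of_int a + of_int b * tau = 0" shows "a = 0 \<and> b = 0"
proof -
  have "of_int a * of_int a = (of_int b * tau) * (of_int b * tau)"
    using assms by (metis add_eq_0_iff2 mult_minus_left mult_minus_right minus_mult_minus)
  also have "\<dots> = of_int b * of_int b * (tau * tau)" by (simp add: algebra_simps)
  also have "\<dots> = of_int b * of_int b * (1 - tau)" by (simp only: tau_sq)
  also have "\<dots> = of_int b * of_int b + of_int b * (of_int a :: real)"
  proof -
    have "of_int a = - (of_int b * tau)" using assms by (simp add: eq_neg_iff_add_eq_0)
    thus ?thesis by (simp add: algebra_simps)
  qed
  finally have "real_of_int (a*a - a*b - b*b) = 0" by (simp add: algebra_simps)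
  hence "a*a - a*b - b*b = 0" by linarith
  thus ?thesis by (rule int_eq_zero)
qed

lemma tau_C: "tau * (1 + tau) = 1" using tau_sq by (simp add: algebra_simps)

lemma Ztau_iff: "x \<in> Ztau \<longleftrightarrow> (\<exists>a b. x = of_int a + of_int b * tau)"
  unfolding Ztau_def by auto

lemma Ztau_add: "x \<in> Ztau \<Longrightarrow> y \<in> Ztau \<Longrightarrow> x + y \<in> Ztau"
  unfolding Ztau_iff
proof (elim exE)
  fix a b c d assume "x = of_int a + of_int b * tau" "y = of_int c + of_int d * tau"
  hence "x + y = of_int (a+c) + of_int (b+d) * tau" by (simp add: algebra_simps)
  thus "\<exists>a b. x + y = of_int a + of_int b * tau" by blast
qed

lemma Ztau_uminus: "x \<in> Ztau \<Longrightarrow> - x \<in> Ztau"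
  unfolding Ztau_iff
proof (elim exE)
  fix a b assume "x = of_int a + of_int b * tau"
  hence "- x = of_int (-a) + of_int (-b) * tau" by (simp add: algebra_simps)
  thus "\<exists>a b. - x = of_int a + of_int b * tau" by blast
qed

lemma Ztau_diff: "x \<in> Ztau \<Longrightarrow> y \<in> Ztau \<Longrightarrow> x - y \<in> Ztau"
  using Ztau_add[OF _ Ztau_uminus, of x y] by (simp only: diff_conv_add_uminus)

lemma Ztau_mult: "x \<in> Ztau \<Longrightarrow> y \<in> Ztau \<Longrightarrow> x * y \<in> Ztau"
  unfolding Ztau_iff
proof (elim exE)
  fix a b c d assume xy: "x = of_int a + of_int b * tau" "y = of_int c + of_int d * tau"
  have "x * y = of_int (a*c) + of_int (a*d+b*c) * tau + of_int (b*d) * (tau*tau)"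
    unfolding xy by (simp add: algebra_simps)
  also have "\<dots> = of_int (a*c + b*d) + of_int (a*d+b*c - b*d) * tau"
    unfolding tau_sq by (simp add: algebra_simps)
  finally show "\<exists>a b. x * y = of_int a + of_int b * tau" by blast
qed

lemma Ztau_int: "of_int a \<in> Ztau"
  unfolding Ztau_iff by (rule exI[of _ a], rule exI[of _ 0], simp)

lemma Ztau_0: "0 \<in> Ztau" using Ztau_int[of 0] by simp
lemma Ztau_1: "1 \<in> Ztau" using Ztau_int[of 1] by simp

lemma Ztau_tau: "tau \<in> Ztau"
  unfolding Ztau_iff by (rule exI[of _ 0], rule exI[of _ 1], simp)

lemma Ztau_pow: "tau ^ k \<in> Ztau"
  by (induction k) (simp_all add: Ztau_1 Ztau_mult Ztau_tau)

lemma inv_tau: "inverse tau = 1 + tau"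
  using tau_C tau_ne0 by (simp add: field_simps)

lemma Ztau_powi: "tau powi e \<in> Ztau"
proof (cases "e \<ge> 0")
  case True
  then show ?thesis using Ztau_pow[of "nat e"] by (simp add: power_int_def)
next
  case False
  have "(1 + tau) ^ n \<in> Ztau" for n
    by (induction n) (simp_all add: Ztau_1 Ztau_mult Ztau_tau Ztau_add)
  then show ?thesis using False by (simp add: power_int_def inv_tau power_inverse)
qed

definition cj :: "real \<Rightarrow> real" where
  "cj x = (THE c. \<exists>a b. x = of_int a + of_int b * tau \<and> c = of_int a - of_int b * (1 + tau))"

lemma cj_eq: "cj (of_int a + of_int b * tau) = of_int a - of_int b * (1 + tau)"
  unfolding cj_def
proof (rule the_equality)
  show "\<exists>a' b'. of_int a + of_int b * tau = of_int a' + of_int b' * tau \<and>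
      of_int a - of_int b * (1 + tau) = of_int a' - of_int b' * (1 + tau)" by blast
next
  fix c assume "\<exists>a' b'. of_int a + of_int b * tau = of_int a' + of_int b' * tau \<and>
      c = of_int a' - of_int b' * (1 + tau)"
  then obtain a' b' where h: "of_int a + of_int b * tau = of_int a' + of_int b' * tau"
     "c = of_int a' - of_int b' * (1 + tau)" by blast
  have "of_int (a - a') + of_int (b - b') * tau = 0" using h(1) by (simp add: algebra_simps)
  from tau_indep[OF this] have "a = a'" "b = b'" by auto
  thus "c = of_int a - of_int b * (1 + tau)" using h(2) by simp
qed

lemma cj_add: "x \<in> Ztau \<Longrightarrow> y \<in> Ztau \<Longrightarrow> cj (x + y) = cj x + cj y"
  unfolding Ztau_iff
proof (elim exE)
  fix a b c d assume xy: "x = of_int a + of_int b * tau" "y = of_int c + of_int d * tau"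
  hence e: "x + y = of_int (a+c) + of_int (b+d) * tau" by (simp add: algebra_simps)
  have 1: "cj (x + y) = of_int (a+c) - of_int (b+d) * (1 + tau)" unfolding e by (rule cj_eq)
  have 2: "cj x = of_int a - of_int b * (1 + tau)" unfolding xy by (rule cj_eq)
  have 3: "cj y = of_int c - of_int d * (1 + tau)" unfolding xy by (rule cj_eq)
  show "cj (x + y) = cj x + cj y" unfolding 1 2 3 by (simp add: algebra_simps)
qed

lemma cj_uminus: "x \<in> Ztau \<Longrightarrow> cj (- x) = - cj x"
  unfolding Ztau_iff
proof (elim exE)
  fix a b assume x: "x = of_int a + of_int b * tau"
  hence e: "- x = of_int (-a) + of_int (-b) * tau" by (simp add: algebra_simps)
  have 1: "cj (- x) = of_int (-a) - of_int (-b) * (1 + tau)" unfolding e by (rule cj_eq)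
  have 2: "cj x = of_int a - of_int b * (1 + tau)" unfolding x by (rule cj_eq)
  show "cj (- x) = - cj x" unfolding 1 2 by (simp add: algebra_simps)
qed

lemma cj_diff: "x \<in> Ztau \<Longrightarrow> y \<in> Ztau \<Longrightarrow> cj (x - y) = cj x - cj y"
  using cj_add[OF _ Ztau_uminus, of x y] cj_uminus[of y] by (simp only: diff_conv_add_uminus)

lemma cj_mult: "x \<in> Ztau \<Longrightarrow> y \<in> Ztau \<Longrightarrow> cj (x * y) = cj x * cj y"
  unfolding Ztau_iff
proof (elim exE)
  fix a b c d assume xy: "x = of_int a + of_int b * tau" "y = of_int c + of_int d * tau"
  have "x * y = of_int (a*c) + of_int (a*d+b*c) * tau + of_int (b*d) * (tau*tau)"
    unfolding xy by (simp add: algebra_simps)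
  also have "\<dots> = of_int (a*c + b*d) + of_int (a*d+b*c - b*d) * tau"
    unfolding tau_sq by (simp add: algebra_simps)
  finally have e: "x * y = of_int (a*c + b*d) + of_int (a*d+b*c - b*d) * tau" .
  have h: "(1 + tau) * (1 + tau) = 2 + tau" using tau_sq by (simp add: algebra_simps)
  have "(of_int a - of_int b * (1 + tau)) * (of_int c - of_int d * (1 + tau)) =
     of_int a * of_int c - (of_int a * of_int d + of_int b * of_int c) * (1 + tau)
       + of_int b * of_int d * ((1 + tau) * (1 + tau))" by (simp add: algebra_simps)
  also have "\<dots> = of_int a * of_int c - (of_int a * of_int d + of_int b * of_int c) * (1 + tau)
       + of_int b * of_int d * (2 + tau)" by (simp only: h)
  also have "\<dots> = of_int (a*c + b*d) - of_int (a*d+b*c - b*d) * (1 + tau)" by (simp add: algebra_simps)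
  finally have "(of_int a - of_int b * (1 + tau)) * (of_int c - of_int d * (1 + tau)) =
     of_int (a*c + b*d) - of_int (a*d+b*c - b*d) * (1 + tau)" .
  moreover have "cj (x * y) = of_int (a*c + b*d) - of_int (a*d+b*c - b*d) * (1 + tau)"
    unfolding e by (rule cj_eq)
  moreover have "cj x = of_int a - of_int b * (1 + tau)" unfolding xy by (rule cj_eq)
  moreover have "cj y = of_int c - of_int d * (1 + tau)" unfolding xy by (rule cj_eq)
  ultimately show "cj (x * y) = cj x * cj y" by simp
qed

lemma cj_int: "cj (of_int a) = of_int a"
  using cj_eq[of a 0] by simp
lemma cj_0: "cj 0 = 0" using cj_int[of 0] by simp
lemma cj_1: "cj 1 = 1" using cj_int[of 1] by simp
lemma cj_tau: "cj tau = - (1 + tau)" using cj_eq[of 0 1] by simp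

lemma cj_pow: "cj (tau ^ k) = (- (1 + tau)) ^ k"
  by (induction k) (simp_all add: cj_1 cj_mult Ztau_tau Ztau_pow cj_tau)

abbreviation LI where "LI \<equiv> leaf_intervals"

fun chain :: "real \<Rightarrow> (real \<times> nat) list \<Rightarrow> real \<Rightarrow> bool" where
  "chain p [] E = (p = E)"
| "chain p ((a,k)#L) E = (a = p \<and> chain (p + tau^k) L E)"

lemma chain_append: "chain p (L1 @ L2) E \<longleftrightarrow> (\<exists>m. chain p L1 m \<and> chain m L2 E)"
  by (induction L1 arbitrary: p) auto

lemma tau_split: "tau^(k+2) + tau^(k+1) = tau^k"
proof -
  have "tau^(k+2) + tau^(k+1) = tau^k * (tau * tau + tau)" by (simp add: algebra_simps power_add power2_eq_square)
  also have "\<dots> = tau^k" using tau_sq by simp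
  finally show ?thesis .
qed

lemma LI_chain: "chain p (LI T p k) (p + tau^k)"
proof (induction T arbitrary: p k)
  case Leaf
  then show ?case by simp
next
  case (X l r)
  have "chain p (LI l p (k+2)) (p + tau^(k+2))" using X.IH(1) .
  moreover have "chain (p + tau^(k+2)) (LI r (p + tau^(k+2)) (k+1)) (p + tau^k)"
    using X.IH(2)[of "p + tau^(k+2)" "k+1"] tau_split[of k] by (simp add: add.assoc)
  ultimately show ?case by (auto simp: chain_append)
next
  case (Y l r)
  have "chain p (LI l p (k+1)) (p + tau^(k+1))" using Y.IH(1) .
  moreover have "chain (p + tau^(k+1)) (LI r (p + tau^(k+1)) (k+2)) (p + tau^k)"
    using Y.IH(2)[of "p + tau^(k+1)" "k+2"] tau_split[of k] by (simp add: add.assoc add.commute)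
  ultimately show ?case by (auto simp: chain_append)
qed

lemma LI_length: "length (LI T p k) = nleaves T"
  by (induction T arbitrary: p k) auto

lemma nleaves_pos: "nleaves T > 0"
  by (induction T) auto

lemma LI_nonempty: "LI T p k \<noteq> []"
  using LI_length[of T p k] nleaves_pos[of T] by auto

lemma chain_bounds: "chain p L E \<Longrightarrow> (a,j) \<in> set L \<Longrightarrow> p \<le> a \<and> a + tau^j \<le> E"
proof (induction L arbitrary: p)
  case Nil then show ?case by simp
next
  case (Cons h L)
  obtain b k where h: "h = (b,k)" by fastforce
  have le: "p + tau^k \<le> E" if "chain (p + tau^k) L E" for L
    using that proof (induction L arbitrary: p k)
    case Nil then show ?case by simp
  next
    case (Cons h' L')
    obtain b' k' where "h' = (b',k')" by fastforce
    with Cons have "p + tau^k + tau^k' \<le> E" by (metis chain.simps(2))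
    moreover have "0 < tau^k'" using tau_pos by simp
    ultimately show ?case by simp
  qed
  from Cons.prems h have c: "b = p" "chain (p + tau^k) L E" by auto
  show ?case
  proof (cases "(a,j) = h")
    case True
    then show ?thesis using c le h by auto
  next
    case False
    hence "(a,j) \<in> set L" using Cons.prems by auto
    from Cons.IH[OF c(2) this] show ?thesis using tau_pos by (smt (verit) zero_less_power)
  qed
qed

lemma chain_le: "chain p L E \<Longrightarrow> p \<le> E"
proof (induction L arbitrary: p)
  case Nil then show ?case by simp
next
  case (Cons h L)
  obtain b k where "h = (b,k)" by fastforce
  with Cons show ?case using tau_pos by (smt (verit) chain.simps(2) zero_less_power)
qed

lemma chain_cover: "chain p L E \<Longrightarrow> L \<noteq> [] \<Longrightarrow> p \<le> x \<Longrightarrow> x \<le> E \<Longrightarrow>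
   \<exists>a j. (a,j) \<in> set L \<and> a \<le> x \<and> x \<le> a + tau^j"
proof (induction L arbitrary: p)
  case Nil then show ?case by simp
next
  case (Cons h L)
  obtain b k where h: "h = (b,k)" by fastforce
  from Cons.prems h have c: "b = p" "chain (p + tau^k) L E" by auto
  show ?case
  proof (cases "x \<le> p + tau^k")
    case True
    hence "(p,k) \<in> set (h#L) \<and> p \<le> x \<and> x \<le> p + tau^k" using h c Cons.prems(3) by simp
    then show ?thesis by blast
  next
    case False
    show ?thesis
    proof (cases "L = []")
      case True
      then show ?thesis using c False Cons.prems by simp
    next
      case False': False
      have "p + tau^k \<le> x" using False by simp
      from Cons.IH[OF c(2) False' this Cons.prems(4)] obtain a j where
        "(a,j) \<in> set L \<and> a \<le> x \<and> x \<le> a + tau^j" by blast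
      hence "(a,j) \<in> set (h#L) \<and> a \<le> x \<and> x \<le> a + tau^j" by simp
      then show ?thesis by blast
    qed
  qed
qed

definition agree :: "(real \<Rightarrow> real) \<Rightarrow> (real \<times> nat) list \<Rightarrow> (real \<times> nat) list \<Rightarrow> bool" where
  "agree f L M = list_all2 (\<lambda>(p,k) (q,m). \<forall>x. p \<le> x \<and> x \<le> p + tau^k \<longrightarrow>
      f x = q + tau powi (int m - int k) * (x - p)) L M"

lemma agree_Nil[simp]: "agree f [] []" unfolding agree_def by simp

lemma agree_Cons: "agree f ((p,k)#L) ((q,m)#M) \<longleftrightarrow>
   (\<forall>x. p \<le> x \<and> x \<le> p + tau^k \<longrightarrow> f x = q + tau powi (int m - int k) * (x - p)) \<and> agree f L M"
  unfolding agree_def by simp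

lemma agree_length: "agree f L M \<Longrightarrow> length L = length M"
  unfolding agree_def by (rule list_all2_lengthD)

lemma agree_append: "length L1 = length M1 \<Longrightarrow>
   agree f (L1 @ L2) (M1 @ M2) \<longleftrightarrow> agree f L1 M1 \<and> agree f L2 M2"
  unfolding agree_def by (rule list_all2_append)

lemma agree_nth:
  assumes "agree f L M" "i < length L" "L!i = (a,j)" "M!i = (b,m)" "a \<le> x" "x \<le> a + tau^j"
  shows "f x = b + tau powi (int m - int j) * (x - a)"
proof -
  have "(case L!i of (p,k) \<Rightarrow> \<lambda>(q,m). \<forall>x. p \<le> x \<and> x \<le> p + tau^k \<longrightarrow>
      f x = q + tau powi (int m - int k) * (x - p)) (M!i)"
    using list_all2_nthD[OF assms(1)[unfolded agree_def] assms(2)] .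
  thus ?thesis using assms(3-6) by simp
qed

lemma agree_cong:
  assumes "agree f L M" "\<And>a j x. (a,j) \<in> set L \<Longrightarrow> a \<le> x \<Longrightarrow> x \<le> a + tau^j \<Longrightarrow> f x = g x"
  shows "agree g L M"
proof -
  have len: "length L = length M" using assms(1) by (rule agree_length)
  show ?thesis unfolding agree_def list_all2_conv_all_nth
  proof (intro conjI allI impI)
    show "length L = length M" by (rule len)
    fix i assume i: "i < length L"
    obtain a j where Li: "L!i = (a,j)" by fastforce
    obtain b m where Mi: "M!i = (b,m)" by fastforce
    have h: "\<forall>x. a \<le> x \<and> x \<le> a + tau^j \<longrightarrow> f x = b + tau powi (int m - int j) * (x - a)"
      using agree_nth[OF assms(1) i Li Mi] by blast
    have mem: "(a,j) \<in> set L" using nth_mem[OF i] Li by simp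
    show "(case L!i of (p,k) \<Rightarrow> \<lambda>(q,m). \<forall>x. p \<le> x \<and> x \<le> p + tau^k \<longrightarrow>
      g x = q + tau powi (int m - int k) * (x - p)) (M!i)"
      unfolding Li Mi using h assms(2)[OF mem] by simp
  qed
qed

lemma agree_unique:
  assumes "agree f L M" "agree g L M" "(a,j) \<in> set L" "a \<le> x" "x \<le> a + tau^j"
  shows "f x = g x"
proof -
  from assms(3) obtain i where i: "i < length L" "L ! i = (a,j)" by (metis in_set_conv_nth)
  have len: "length L = length M" using assms(1) by (rule agree_length)
  obtain b m where bm: "M ! i = (b,m)" by fastforce
  have "f x = b + tau powi (int m - int j) * (x - a)" by (rule agree_nth[OF assms(1) i bm assms(4,5)])
  moreover have "g x = b + tau powi (int m - int j) * (x - a)" by (rule agree_nth[OF assms(2) i bm assms(4,5)])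
  ultimately show ?thesis by simp
qed

lemma powi_add: "tau powi (a + b) = tau powi a * tau powi b"
  using power_int_add[of tau a b] tau_ne0 by simp

lemma powi_cancel: "tau powi (int m - int k) * tau ^ k = tau ^ m"
proof -
  have "tau powi (int m - int k) * tau ^ k = tau powi (int m - int k) * tau powi (int k)"
    by simp
  also have "\<dots> = tau powi (int m - int k + int k)" by (simp only: powi_add)
  finally show ?thesis by simp
qed

lemma powi_comb: "tau powi (int n - int m) * (tau powi (int m - int k) * y) = tau powi (int n - int k) * y"
proof -
  have "tau powi (int n - int m) * tau powi (int m - int k) = tau powi (int n - int m + (int m - int k))"
    by (simp only: powi_add)
  thus ?thesis by (simp add: mult.assoc[symmetric])
qed

lemma apply_pl_agree:
  "length L = length M \<Longrightarrow> chain p L E \<Longrightarrow> chain q M E' \<Longrightarrow> agree (apply_pl L M) L M"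
proof (induction L M arbitrary: p q rule: list_induct2)
  case Nil then show ?case by simp
next
  case (Cons h L h' M)
  obtain a k where h: "h = (a,k)" by fastforce
  obtain b m where h': "h' = (b,m)" by fastforce
  from Cons.prems h h' have c: "a = p" "chain (p + tau^k) L E" "b = q" "chain (q + tau^m) M E'" by auto
  have IH: "agree (apply_pl L M) L M" using Cons.IH[OF c(2) c(4)] .
  have tail: "agree (apply_pl ((p,k)#L) ((q,m)#M)) L M"
  proof (rule agree_cong[OF IH])
    fix a' j x assume m: "(a',j) \<in> set L" "a' \<le> x" "x \<le> a' + tau^j"
    have ge: "p + tau^k \<le> x" using chain_bounds[OF c(2) m(1)] m(2) by simp
    show "apply_pl L M x = apply_pl ((p,k)#L) ((q,m)#M) x"
    proof (cases "x = p + tau^k")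
      case False
      then show ?thesis using ge by simp
    next
      case True
      obtain a0 j0 L' where L: "L = (a0,j0)#L'" using m(1) by (cases L) auto
      obtain b0 m0 M' where M: "M = (b0,m0)#M'" using Cons.hyps L by (cases M) auto
      have a0: "a0 = p + tau^k" using c(2) L by simp
      have b0: "b0 = q + tau^m" using c(4) M by simp
      have "apply_pl L M x = q + tau^m" using True L M a0 b0 tau_pos by simp
      moreover have "apply_pl ((p,k)#L) ((q,m)#M) x = q + tau^m"
        using True powi_cancel by simp
      ultimately show ?thesis by simp
    qed
  qed
  show ?case unfolding h h' c(1,3) agree_Cons using tail by simp
qed

lemma tp_agree:
  assumes "nleaves T1 = nleaves T2"
  shows "agree (tree_pair T1 T2) (LI T1 0 0) (LI T2 0 0)"
proof -
  have c1: "chain 0 (LI T1 0 0) 1" using LI_chain[of 0 T1 0] by simp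
  have c2: "chain 0 (LI T2 0 0) 1" using LI_chain[of 0 T2 0] by simp
  have "agree (apply_pl (LI T1 0 0) (LI T2 0 0)) (LI T1 0 0) (LI T2 0 0)"
    by (rule apply_pl_agree[OF _ c1 c2]) (simp add: LI_length assms)
  thus ?thesis
  proof (rule agree_cong)
    fix a j x assume "(a,j) \<in> set (LI T1 0 0)" "a \<le> x" "x \<le> a + tau^j"
    with chain_bounds[OF c1 this(1)] have "0 \<le> x \<and> x \<le> 1" by simp
    thus "apply_pl (LI T1 0 0) (LI T2 0 0) x = tree_pair T1 T2 x" unfolding tree_pair_def by simp
  qed
qed

lemma tp_outside: "x < 0 \<or> 1 < x \<Longrightarrow> tree_pair T1 T2 x = x"
  unfolding tree_pair_def by auto

lemma tp_char:
  assumes "nleaves T1 = nleaves T2" "\<And>x. x < 0 \<or> 1 < x \<Longrightarrow> f x = x"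
    "agree f (LI T1 0 0) (LI T2 0 0)"
  shows "f = tree_pair T1 T2"
proof
  fix x
  show "f x = tree_pair T1 T2 x"
  proof (cases "x < 0 \<or> 1 < x")
    case True
    then show ?thesis using assms(2) tp_outside by simp
  next
    case False
    have c1: "chain 0 (LI T1 0 0) 1" using LI_chain[of 0 T1 0] by simp
    from chain_cover[OF c1 LI_nonempty, of x] False obtain a j where
      "(a,j) \<in> set (LI T1 0 0)" "a \<le> x" "x \<le> a + tau^j" by auto
    from agree_unique[OF assms(3) tp_agree[OF assms(1)] this] show ?thesis .
  qed
qed

lemma agree_comp: "agree f L M \<Longrightarrow> agree g M N \<Longrightarrow> agree (g \<circ> f) L N"
  unfolding agree_def
proof (erule list_all2_trans[rotated], assumption)
  fix u v w
  assume A: "(case u of (p, k) \<Rightarrow> \<lambda>(q, m). \<forall>x. p \<le> x \<and> x \<le> p + tau ^ k \<longrightarrow> f x = q + tau powi (int m - int k) * (x - p)) v"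
    and B: "(case v of (p, k) \<Rightarrow> \<lambda>(q, m). \<forall>x. p \<le> x \<and> x \<le> p + tau ^ k \<longrightarrow> g x = q + tau powi (int m - int k) * (x - p)) w"
  obtain p k where u: "u = (p,k)" by fastforce
  obtain q m where v: "v = (q,m)" by fastforce
  obtain r n where w: "w = (r,n)" by fastforce
  show "(case u of (p, k) \<Rightarrow> \<lambda>(q, m). \<forall>x. p \<le> x \<and> x \<le> p + tau ^ k \<longrightarrow> (g \<circ> f) x = q + tau powi (int m - int k) * (x - p)) w"
    unfolding u w
  proof (simp, intro allI impI)
    fix x assume x: "p \<le> x \<and> x \<le> p + tau ^ k"
    have fx: "f x = q + tau powi (int m - int k) * (x - p)" using A x unfolding u v by simp
    have pos: "0 < tau powi (int m - int k)" using tau_pos by simp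
    have "tau powi (int m - int k) * (x - p) \<le> tau powi (int m - int k) * tau ^ k"
      using x pos by (intro mult_left_mono) auto
    hence "q \<le> f x \<and> f x \<le> q + tau^m" using fx pos x powi_cancel[of m k] by simp
    hence "g (f x) = r + tau powi (int n - int m) * (f x - q)" using B unfolding v w by simp
    also have "\<dots> = r + tau powi (int n - int k) * (x - p)" unfolding fx by (simp add: powi_comb)
    finally show "g (f x) = r + tau powi (int n - int k) * (x - p)" .
  qed
qed

lemma agree_id: "agree id L L"
  unfolding agree_def by (induction L) auto

lemma tp_id: "tree_pair T T = id"
  by (rule tp_char[symmetric]) (simp_all add: agree_id)

lemma tp_comp:
  assumes "nleaves T1 = nleaves T2" "nleaves T2 = nleaves T3"
  shows "tree_pair T2 T3 \<circ> tree_pair T1 T2 = tree_pair T1 T3"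
proof (rule tp_char)
  show "nleaves T1 = nleaves T3" using assms by simp
  show "(tree_pair T2 T3 \<circ> tree_pair T1 T2) x = x" if "x < 0 \<or> 1 < x" for x
    using that by (simp add: tp_outside)
  show "agree (tree_pair T2 T3 \<circ> tree_pair T1 T2) (LI T1 0 0) (LI T3 0 0)"
    by (rule agree_comp[OF tp_agree[OF assms(1)] tp_agree[OF assms(2)]])
qed

lemma tp_inv:
  assumes "nleaves T1 = nleaves T2"
  shows "inv (tree_pair T1 T2) = tree_pair T2 T1"
  by (rule inv_unique_comp) (use assms tp_comp tp_id in auto)

declare nleaves_pos[simp]

fun subst :: "tree \<Rightarrow> tree list \<Rightarrow> tree" where
  "subst Leaf ts = (case ts of [] \<Rightarrow> Leaf | t#_ \<Rightarrow> t)"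
| "subst (X l r) ts = X (subst l (take (nleaves l) ts)) (subst r (drop (nleaves l) ts))"
| "subst (Y l r) ts = Y (subst l (take (nleaves l) ts)) (subst r (drop (nleaves l) ts))"

definition BL :: "(real \<times> nat) list \<Rightarrow> tree list \<Rightarrow> (real \<times> nat) list" where
  "BL L ts = concat (map (\<lambda>((a,k),t). LI t a k) (zip L ts))"

lemma BL_Nil[simp]: "BL [] ts = []" unfolding BL_def by simp
lemma BL_Cons[simp]: "BL ((a,k)#L) (t#ts) = LI t a k @ BL L ts" unfolding BL_def by simp

lemma BL_append: "length L1 = length ts1 \<Longrightarrow> BL (L1 @ L2) (ts1 @ ts2) = BL L1 ts1 @ BL L2 ts2"
  unfolding BL_def by simp

lemma LI_subst: "length ts = nleaves T \<Longrightarrow> LI (subst T ts) p k = BL (LI T p k) ts"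
proof (induction T arbitrary: ts p k)
  case Leaf
  then obtain t where "ts = [t]" by (cases ts) auto
  then show ?case by simp
next
  case (X l r)
  let ?n = "nleaves l"
  have ts: "ts = take ?n ts @ drop ?n ts" by simp
  have l1: "length (take ?n ts) = nleaves l" using X.prems by simp
  have l2: "length (drop ?n ts) = nleaves r" using X.prems by simp
  have "BL (LI (X l r) p k) ts = BL (LI l p (k+2)) (take ?n ts) @ BL (LI r (p + tau^(k+2)) (k+1)) (drop ?n ts)"
    by (subst ts, simp only: leaf_intervals.simps, rule BL_append) (use X.prems in \<open>simp add: LI_length\<close>)
  then show ?case using X.IH(1)[OF l1] X.IH(2)[OF l2] by simp
next
  case (Y l r)
  let ?n = "nleaves l"
  have ts: "ts = take ?n ts @ drop ?n ts" by simp
  have l1: "length (take ?n ts) = nleaves l" using Y.prems by simp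
  have l2: "length (drop ?n ts) = nleaves r" using Y.prems by simp
  have "BL (LI (Y l r) p k) ts = BL (LI l p (k+1)) (take ?n ts) @ BL (LI r (p + tau^(k+1)) (k+2)) (drop ?n ts)"
    by (subst ts, simp only: leaf_intervals.simps, rule BL_append) (use Y.prems in \<open>simp add: LI_length\<close>)
  then show ?case using Y.IH(1)[OF l1] Y.IH(2)[OF l2] by simp
qed

lemma length_BL: "length L = length ts \<Longrightarrow> length (BL L ts) = sum_list (map nleaves ts)"
proof (induction L ts rule: list_induct2)
  case Nil then show ?case by simp
next
  case (Cons x xs y ys)
  obtain a k where "x = (a,k)" by fastforce
  then show ?case using Cons by (simp add: LI_length)
qed

lemma agree_single: "agree F [(p,k)] [(q,m)] \<longleftrightarrow>
   (\<forall>x. p \<le> x \<and> x \<le> p + tau^k \<longrightarrow> F x = q + tau powi (int m - int k) * (x - p))"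
  by (simp add: agree_Cons)

lemma tau_pow_mono: "i \<le> j \<Longrightarrow> tau^j \<le> tau^i"
  using tau_pos tau_lt1 by (simp add: power_decreasing)

lemma agree_refine: "agree F [(p,k)] [(q,m)] \<Longrightarrow> agree F (LI t p k) (LI t q m)"
proof (induction t arbitrary: p k q m)
  case Leaf
  then show ?case by simp
next
  case (X l r)
  have H: "F x = q + tau powi (int m - int k) * (x - p)" if "p \<le> x" "x \<le> p + tau^k" for x
    using X.prems that by (simp add: agree_single)
  have e1: "int (m+2) - int (k+2) = int m - int k" "int (m+1) - int (k+1) = int m - int k" by simp_all
  have A: "agree F [(p,k+2)] [(q,m+2)]" unfolding agree_single e1
  proof (intro allI impI)
    fix x assume "p \<le> x \<and> x \<le> p + tau^(k+2)"
    moreover have "tau^(k+2) \<le> tau^k" by (rule tau_pow_mono) simp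
    ultimately show "F x = q + tau powi (int m - int k) * (x - p)" using H by simp
  qed
  have B: "agree F [(p + tau^(k+2),k+1)] [(q + tau^(m+2),m+1)]" unfolding agree_single e1
  proof (intro allI impI)
    fix x assume x: "p + tau^(k+2) \<le> x \<and> x \<le> p + tau^(k+2) + tau^(k+1)"
    have "0 \<le> tau^(k+2)" using tau_pos by simp
    hence "p \<le> x \<and> x \<le> p + tau^k" using x tau_split[of k] by simp
    hence "F x = q + tau powi (int m - int k) * (x - p)" using H by simp
    also have "\<dots> = q + tau powi (int m - int k) * tau^(k+2) + tau powi (int m - int k) * (x - (p + tau^(k+2)))"
      by (simp add: algebra_simps)
    also have "tau powi (int m - int k) * tau^(k+2) = tau^(m+2)"
      using powi_cancel[of "m+2" "k+2"] by simp
    finally show "F x = q + tau ^ (m + 2) + tau powi (int m - int k) * (x - (p + tau ^ (k + 2)))" .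
  qed
  show ?case using X.IH(1)[OF A] X.IH(2)[OF B] by (simp add: agree_append LI_length)
next
  case (Y l r)
  have H: "F x = q + tau powi (int m - int k) * (x - p)" if "p \<le> x" "x \<le> p + tau^k" for x
    using Y.prems that by (simp add: agree_single)
  have e1: "int (m+2) - int (k+2) = int m - int k" "int (m+1) - int (k+1) = int m - int k" by simp_all
  have A: "agree F [(p,k+1)] [(q,m+1)]" unfolding agree_single e1
  proof (intro allI impI)
    fix x assume "p \<le> x \<and> x \<le> p + tau^(k+1)"
    moreover have "tau^(k+1) \<le> tau^k" by (rule tau_pow_mono) simp
    ultimately show "F x = q + tau powi (int m - int k) * (x - p)" using H by simp
  qed
  have B: "agree F [(p + tau^(k+1),k+2)] [(q + tau^(m+1),m+2)]" unfolding agree_single e1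
  proof (intro allI impI)
    fix x assume x: "p + tau^(k+1) \<le> x \<and> x \<le> p + tau^(k+1) + tau^(k+2)"
    have "0 \<le> tau^(k+1)" using tau_pos by simp
    hence "p \<le> x \<and> x \<le> p + tau^k" using x tau_split[of k] by simp
    hence "F x = q + tau powi (int m - int k) * (x - p)" using H by simp
    also have "\<dots> = q + tau powi (int m - int k) * tau^(k+1) + tau powi (int m - int k) * (x - (p + tau^(k+1)))"
      by (simp add: algebra_simps)
    also have "tau powi (int m - int k) * tau^(k+1) = tau^(m+1)"
      using powi_cancel[of "m+1" "k+1"] by simp
    finally show "F x = q + tau ^ (m + 1) + tau powi (int m - int k) * (x - (p + tau ^ (k + 1)))" .
  qed
  show ?case using Y.IH(1)[OF A] Y.IH(2)[OF B] by (simp add: agree_append LI_length)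
qed

lemma agree_BL: "agree F L M \<Longrightarrow> length ts = length L \<Longrightarrow> agree F (BL L ts) (BL M ts)"
proof (induction ts arbitrary: L M)
  case Nil
  then show ?case using agree_length[OF Nil.prems(1)] by simp
next
  case (Cons t ts)
  obtain p k L' where L: "L = (p,k)#L'" using Cons.prems(2) by (cases L) auto
  obtain q m M' where M: "M = (q,m)#M'" using agree_length[OF Cons.prems(1)] L by (cases M) auto
  from Cons.prems(1) have h: "agree F [(p,k)] [(q,m)]" "agree F L' M'"
    unfolding L M agree_Cons agree_single by auto
  have "agree F (BL L' ts) (BL M' ts)" using Cons.IH[OF h(2)] Cons.prems(2) L by simp
  then show ?case unfolding L M using agree_refine[OF h(1), of t]
    by (simp add: agree_append LI_length)
qed

lemma nleaves_LI: "nleaves T = length (LI T 0 0)" by (simp add: LI_length)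

lemma subst_tp:
  assumes "length ts = nleaves T1" "nleaves T1 = nleaves T2"
  shows "tree_pair (subst T1 ts) (subst T2 ts) = tree_pair T1 T2"
proof (rule tp_char[symmetric])
  have l1: "LI (subst T1 ts) 0 0 = BL (LI T1 0 0) ts" using LI_subst assms by simp
  have l2: "LI (subst T2 ts) 0 0 = BL (LI T2 0 0) ts" using LI_subst assms by simp
  show "nleaves (subst T1 ts) = nleaves (subst T2 ts)"
    unfolding nleaves_LI l1 l2 using assms by (simp add: length_BL LI_length)
  show "tree_pair T1 T2 x = x" if "x < 0 \<or> 1 < x" for x using that by (rule tp_outside)
  show "agree (tree_pair T1 T2) (LI (subst T1 ts) 0 0) (LI (subst T2 ts) 0 0)"
    unfolding l1 l2 using assms by (intro agree_BL tp_agree) (simp_all add: LI_length)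
qed

definition rs :: "nat \<Rightarrow> tree \<Rightarrow> tree" where "rs n t = (X Leaf ^^ n) t"

lemma rs_0[simp]: "rs 0 t = t" unfolding rs_def by simp
lemma rs_Suc[simp]: "rs (Suc n) t = X Leaf (rs n t)" unfolding rs_def by simp
lemma rs_Suc_right: "rs (Suc n) t = rs n (X Leaf t)" unfolding rs_def by (simp only: funpow_Suc_right comp_def)

lemma nleaves_rs[simp]: "nleaves (rs n t) = n + nleaves t" by (induction n) auto
lemma nleaves_spine[simp]: "nleaves (spine n) = n + 1" by (induction n) auto

lemma spine_rs: "spine (n + m) = rs n (spine m)" by (induction n) auto

lemma attach_spine: "attach c n (spine (Suc n)) = rs n (X c Leaf)"
proof (induction n)
  case 0 then show ?case by simp
next
  case (Suc n)
  have "spine (Suc (Suc n)) = X Leaf (spine (Suc n))" by simp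
  then show ?case using Suc by simp
qed

lemma subst_rs: "length ts = nleaves t \<Longrightarrow> subst (rs n t) (replicate n Leaf @ ts) = rs n (subst t ts)"
  by (induction n) auto

lemma LI_rs_cong: "(\<And>p k. LI t p k = LI t' p k) \<Longrightarrow> LI (rs n t) p k = LI (rs n t') p k"
  by (induction n arbitrary: p k) auto

lemma LI_YY: "LI (Y (Y a b) c) p k = LI (X a (X b c)) p k"
proof -
  have n1: "k+1+1 = k+2" by simp
  have "tau^(k+1+2) + tau^(k+1+1) = tau^(k+1)" by (rule tau_split)
  hence e: "p + tau^(k+2) + tau^(k+1+2) = p + tau^(k+1)" unfolding n1 by linarith
  show ?thesis by (simp only: leaf_intervals.simps append_assoc n1 e)
qed

abbreviation G where "G \<equiv> generated (range xgen \<union> range ygen)"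

lemma xgen_G: "xgen n \<in> G" by (rule gen_base) auto
lemma ygen_G: "ygen n \<in> G" by (rule gen_base) auto

lemma xgen_rs: "xgen n = tree_pair (rs n (X (X Leaf Leaf) Leaf)) (rs n (X Leaf (X Leaf Leaf)))"
  unfolding xgen_def using attach_spine[of "X Leaf Leaf" n] spine_rs[of n 2]
  by (simp add: numeral_eq_Suc)

lemma ygen_rs: "ygen n = tree_pair (rs n (X (Y Leaf Leaf) Leaf)) (rs n (X Leaf (X Leaf Leaf)))"
  unfolding ygen_def using attach_spine[of "Y Leaf Leaf" n] spine_rs[of n 2]
  by (simp add: numeral_eq_Suc)

lemma xmove: "tree_pair (rs n (X (X a b) c)) (rs n (X a (X b c))) = xgen n"
proof -
  let ?ts = "replicate n Leaf @ [a,b,c]"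
  have "tree_pair (subst (rs n (X (X Leaf Leaf) Leaf)) ?ts) (subst (rs n (X Leaf (X Leaf Leaf))) ?ts)
     = tree_pair (rs n (X (X Leaf Leaf) Leaf)) (rs n (X Leaf (X Leaf Leaf)))"
    by (rule subst_tp) simp_all
  moreover have "subst (rs n (X (X Leaf Leaf) Leaf)) ?ts = rs n (X (X a b) c)"
    by (subst subst_rs) simp_all
  moreover have "subst (rs n (X Leaf (X Leaf Leaf))) ?ts = rs n (X a (X b c))"
    by (subst subst_rs) simp_all
  ultimately show ?thesis using xgen_rs by simp
qed

lemma ymove: "tree_pair (rs n (X (Y a b) c)) (rs n (X a (X b c))) = ygen n"
proof -
  let ?ts = "replicate n Leaf @ [a,b,c]"
  have "tree_pair (subst (rs n (X (Y Leaf Leaf) Leaf)) ?ts) (subst (rs n (X Leaf (X Leaf Leaf))) ?ts)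
     = tree_pair (rs n (X (Y Leaf Leaf) Leaf)) (rs n (X Leaf (X Leaf Leaf)))"
    by (rule subst_tp) simp_all
  moreover have "subst (rs n (X (Y Leaf Leaf) Leaf)) ?ts = rs n (X (Y a b) c)"
    by (subst subst_rs) simp_all
  moreover have "subst (rs n (X Leaf (X Leaf Leaf))) ?ts = rs n (X a (X b c))"
    by (subst subst_rs) simp_all
  ultimately show ?thesis using ygen_rs by simp
qed

lemma yswap: "tree_pair (rs n (Y a b)) (rs n (X a b)) = inv (ygen n)"
proof -
  let ?ts = "replicate n Leaf @ [a,b]"
  let ?us = "replicate n Leaf @ [Y Leaf Leaf, Leaf]"
  have "tree_pair (rs n (Y a b)) (rs n (X a b)) =
      tree_pair (subst (rs n (Y Leaf Leaf)) ?ts) (subst (rs n (X Leaf Leaf)) ?ts)"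
    by (subst (1 2) subst_rs) simp_all
  also have "\<dots> = tree_pair (rs n (Y Leaf Leaf)) (rs n (X Leaf Leaf))"
    by (rule subst_tp) simp_all
  also have "\<dots> = tree_pair (subst (rs n (Y Leaf Leaf)) ?us) (subst (rs n (X Leaf Leaf)) ?us)"
    by (rule subst_tp[symmetric]) simp_all
  also have "\<dots> = tree_pair (rs n (Y (Y Leaf Leaf) Leaf)) (rs n (X (Y Leaf Leaf) Leaf))"
    by (subst (1 2) subst_rs) simp_all
  also have "\<dots> = tree_pair (rs n (X Leaf (X Leaf Leaf))) (rs n (X (Y Leaf Leaf) Leaf))"
    unfolding tree_pair_def using LI_rs_cong[of "Y (Y Leaf Leaf) Leaf" "X Leaf (X Leaf Leaf)" n 0 0] LI_YY
    by presburger
  also have "\<dots> = inv (ygen n)" unfolding ygen_rs by (subst tp_inv) simp_all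
  finally show ?thesis .
qed

lemma G_comp_tp:
  assumes "tree_pair A B \<in> G" "tree_pair B C \<in> G" "nleaves A = nleaves B" "nleaves B = nleaves C"
  shows "tree_pair A C \<in> G"
  using gen_comp[OF assms(2) assms(1)] tp_comp[OF assms(3,4)] by simp

fun lsz :: "tree \<Rightarrow> nat" where
  "lsz Leaf = 0" | "lsz (X l r) = nleaves l" | "lsz (Y l r) = nleaves l"
fun ytag :: "tree \<Rightarrow> nat" where
  "ytag (Y l r) = 1" | "ytag _ = 0"

definition mu :: "tree \<Rightarrow> nat" where "mu t = 4 * nleaves t * nleaves t + 2 * lsz t + ytag t"

lemma lsz_le: "lsz t \<le> nleaves t" by (cases t) auto
lemma ytag_le: "ytag t \<le> 1" by (cases t) auto

lemma claimN: "tree_pair (rs n t) (spine (n + nleaves t - 1)) \<in> G"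
proof (induction t arbitrary: n rule: measure_induct_rule[of mu])
  case (less t)
  show ?case
  proof (cases t)
    case Leaf
    have *: "tree_pair (rs n t) (spine (n + nleaves t - 1)) = id" using spine_rs[of n 0] tp_id Leaf by simp
    show ?thesis unfolding * by (rule gen_id)
  next
    case (Y a b)
    have m: "mu (X a b) < mu t" unfolding Y mu_def by simp
    have "tree_pair (rs n (Y a b)) (rs n (X a b)) \<in> G" unfolding yswap by (rule gen_inv[OF ygen_G])
    from G_comp_tp[OF this less[OF m, of n]] show ?thesis unfolding Y by simp
  next
    case (X l c)
    note tX = X
    show ?thesis
    proof (cases l)
      case Leaf
      have m: "mu c < mu t" unfolding tX Leaf mu_def
        using lsz_le[of c] ytag_le[of c] by (simp add: algebra_simps)
      have "rs n t = rs (Suc n) c" unfolding tX Leaf by (simp only: rs_Suc_right)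
      with less[OF m, of "Suc n"] show ?thesis unfolding tX Leaf by simp
    next
      case (X a b)
      have m: "mu (X a (X b c)) < mu t" unfolding tX X mu_def using nleaves_pos[of b] by (simp add: algebra_simps)
      have "tree_pair (rs n (X (X a b) c)) (rs n (X a (X b c))) \<in> G" unfolding xmove by (rule xgen_G)
      from G_comp_tp[OF this less[OF m, of n]] show ?thesis unfolding tX X by (simp add: add.assoc)
    next
      case (Y a b)
      have m: "mu (X a (X b c)) < mu t" unfolding tX Y mu_def using nleaves_pos[of b] by (simp add: algebra_simps)
      have "tree_pair (rs n (X (Y a b) c)) (rs n (X a (X b c))) \<in> G" unfolding ymove by (rule ygen_G)
      from G_comp_tp[OF this less[OF m, of n]] show ?thesis unfolding tX Y by (simp add: add.assoc)
    qed
  qed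
qed

lemma TP_G:
  assumes "nleaves T1 = nleaves T2"
  shows "tree_pair T1 T2 \<in> G"
proof -
  let ?S = "spine (nleaves T1 - 1)"
  have nS: "nleaves ?S = nleaves T1" using nleaves_pos[of T1] by simp
  have 1: "tree_pair T1 ?S \<in> G" using claimN[of 0 T1] by simp
  have "tree_pair T2 ?S \<in> G" using claimN[of 0 T2] assms by simp
  hence 2: "tree_pair ?S T2 \<in> G" using gen_inv tp_inv[of T2 ?S] nS assms by metis
  show ?thesis using G_comp_tp[OF 1 2] nS assms by simp
qed

definition PtsC :: "(real \<times> nat) list \<Rightarrow> real \<Rightarrow> real set" where
  "PtsC L E = fst ` set L \<union> {E}"

lemma PtsC_Nil[simp]: "PtsC [] E = {E}" unfolding PtsC_def by simp
lemma PtsC_Cons[simp]: "PtsC ((a,k)#L) E = insert a (PtsC L E)" unfolding PtsC_def by auto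
lemma PtsC_append: "PtsC (L1 @ L2) E = fst ` set L1 \<union> PtsC L2 E" unfolding PtsC_def by auto

lemma finite_PtsC: "finite (PtsC L E)" unfolding PtsC_def by simp

lemma chain_start: "chain p L E \<Longrightarrow> p \<in> PtsC L E"
  by (cases L) auto

lemma chain_end: "E \<in> PtsC L E" unfolding PtsC_def by simp

lemma chain_ge: "chain p L E \<Longrightarrow> y \<in> PtsC L E \<Longrightarrow> p \<le> y"
proof (induction L arbitrary: p)
  case Nil then show ?case by simp
next
  case (Cons h L)
  obtain a k where h: "h = (a,k)" by fastforce
  from Cons.prems h have c: "a = p" "chain (p + tau^k) L E" "y = a \<or> y \<in> PtsC L E" by auto
  show ?case using c Cons.IH[OF c(2)] tau_pos by (smt (verit) zero_less_power)
qed

lemma chain_unique: "chain p L E \<Longrightarrow> chain p L' E \<Longrightarrow> PtsC L E = PtsC L' E \<Longrightarrow> L = L'"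
proof (induction L arbitrary: p L')
  case Nil
  hence pE: "p = E" by simp
  show ?case
  proof (cases L')
    case Nil then show ?thesis by simp
  next
    case (Cons h L'')
    obtain a k where h: "h = (a,k)" by fastforce
    have c: "chain (p + tau^k) L'' E" using Nil.prems(2) Cons h pE by simp
    have m: "p + tau^k \<in> PtsC L' E" using chain_start[OF c] Cons h by simp
    have "PtsC L' E = {E}" using Nil.prems(3) by simp
    hence "p + tau^k = E" using m by simp
    thus ?thesis using pE tau_pos by simp
  qed
next
  case (Cons h L1)
  note pr = Cons.prems
  note IH = Cons.IH
  obtain a k where h: "h = (a,k)" by fastforce
  from Cons.prems(1) h have c: "a = p" "chain (p + tau^k) L1 E" by auto
  have s1: "p + tau^k \<in> PtsC L1 E" by (rule chain_start[OF c(2)])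
  show ?case
  proof (cases L')
    case Nil
    hence pE: "p = E" using pr(2) by simp
    have "PtsC L' E = insert a (PtsC L1 E)" using pr(3) h by simp
    hence "p + tau^k \<in> PtsC L' E" using s1 by simp
    hence "p + tau^k = E" using Nil by simp
    thus ?thesis using pE tau_pos by simp
  next
    case (Cons h' L1')
    obtain a' k' where h': "h' = (a',k')" by fastforce
    from pr(2) Cons h' have c': "a' = p" "chain (p + tau^k') L1' E" by auto
    have s1': "p + tau^k' \<in> PtsC L1' E" by (rule chain_start[OF c'(2)])
    have ge1: "y \<in> PtsC L1 E \<Longrightarrow> p + tau^k \<le> y" for y using chain_ge[OF c(2)] by simp
    have ge1': "y \<in> PtsC L1' E \<Longrightarrow> p + tau^k' \<le> y" for y using chain_ge[OF c'(2)] by simp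
    have P: "insert p (PtsC L1 E) = insert p (PtsC L1' E)"
      using pr(3) h h' c c' Cons by simp
    have kk: "k = k'"
    proof (rule ccontr)
      assume "k \<noteq> k'"
      hence "k < k' \<or> k' < k" by auto
      thus False
      proof
        assume "k < k'"
        hence lt: "tau^k' < tau^k" using tau_pos tau_lt1 by (simp add: power_strict_decreasing)
        have "p + tau^k' \<in> insert p (PtsC L1 E)" using P s1' by blast
        moreover have "p + tau^k' \<noteq> p" using tau_pos by simp
        ultimately have "p + tau^k' \<in> PtsC L1 E" by blast
        from ge1[OF this] lt show False by simp
      next
        assume "k' < k"
        hence lt: "tau^k < tau^k'" using tau_pos tau_lt1 by (simp add: power_strict_decreasing)
        have "p + tau^k \<in> insert p (PtsC L1' E)" using P s1 by blast
        moreover have "p + tau^k \<noteq> p" using tau_pos by simp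
        ultimately have "p + tau^k \<in> PtsC L1' E" by blast
        from ge1'[OF this] lt show False by simp
      qed
    qed
    have np: "p \<notin> PtsC L1 E" "p \<notin> PtsC L1' E"
      using ge1 ge1' tau_pos by (smt (verit) zero_less_power)+
    have "PtsC L1 E = PtsC L1' E"
    proof -
      have "PtsC L1 E = insert p (PtsC L1 E) - {p}" using np by simp
      also have "\<dots> = insert p (PtsC L1' E) - {p}" using P by simp
      also have "\<dots> = PtsC L1' E" using np by simp
      finally show ?thesis .
    qed
    from IH[OF c(2) _ this] c'(2) kk have "L1 = L1'" by simp
    then show ?thesis using Cons h h' c c' kk by simp
  qed
qed

lemma chain_Ztau: "chain p L E \<Longrightarrow> p \<in> Ztau \<Longrightarrow> y \<in> PtsC L E \<Longrightarrow> y \<in> Ztau"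
proof (induction L arbitrary: p)
  case Nil then show ?case by simp
next
  case (Cons h L)
  obtain a k where h: "h = (a,k)" by fastforce
  from Cons.prems h have c: "a = p" "chain (p + tau^k) L E" "y = a \<or> y \<in> PtsC L E" by auto
  have "p + tau^k \<in> Ztau" using Cons.prems(2) Ztau_add Ztau_pow by blast
  then show ?case using c Cons.IH[OF c(2)] Cons.prems(2) by auto
qed

lemma chain_BL: "chain p L E \<Longrightarrow> length ts = length L \<Longrightarrow> chain p (BL L ts) E"
proof (induction L arbitrary: p ts)
  case Nil then show ?case by simp
next
  case (Cons h L)
  obtain a k where h: "h = (a,k)" by fastforce
  obtain t ts' where ts: "ts = t # ts'" using Cons.prems(2) by (cases ts) auto
  from Cons.prems h have c: "a = p" "chain (p + tau^k) L E" by auto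
  have "chain (p + tau^k) (BL L ts') E" using Cons.IH[OF c(2)] Cons.prems(2) ts by simp
  moreover have "chain p (LI t p k) (p + tau^k)" by (rule LI_chain)
  ultimately show ?case using h ts c by (auto simp: chain_append)
qed

definition Pts :: "tree \<Rightarrow> real \<Rightarrow> nat \<Rightarrow> real set" where
  "Pts t a k = PtsC (LI t a k) (a + tau^k)"

lemma Pts_X: "Pts (X l r) a k = Pts l a (k+2) \<union> Pts r (a + tau^(k+2)) (k+1)"
proof -
  have e: "a + tau^(k+2) + tau^(k+1) = a + tau^k" using tau_split[of k] by simp
  have m: "a + tau^(k+2) \<in> PtsC (LI r (a + tau^(k+2)) (k+1)) (a + tau^(k+2) + tau^(k+1))"
    by (rule chain_start[OF LI_chain])
  hence m': "a + tau^(k+2) \<in> PtsC (LI r (a + tau^(k+2)) (k+1)) (a + tau^k)" unfolding e .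
  have "Pts (X l r) a k = fst ` set (LI l a (k+2)) \<union> PtsC (LI r (a + tau^(k+2)) (k+1)) (a + tau^k)"
    unfolding Pts_def by (simp add: PtsC_append)
  moreover have "Pts l a (k+2) \<union> Pts r (a + tau^(k+2)) (k+1) =
     fst ` set (LI l a (k+2)) \<union> {a + tau^(k+2)} \<union> PtsC (LI r (a + tau^(k+2)) (k+1)) (a + tau^k)"
    unfolding Pts_def e by (simp add: PtsC_def)
  ultimately show ?thesis using m' by auto
qed

lemma Pts_Y: "Pts (Y l r) a k = Pts l a (k+1) \<union> Pts r (a + tau^(k+1)) (k+2)"
proof -
  have e: "a + tau^(k+1) + tau^(k+2) = a + tau^k" using tau_split[of k] by simp
  have m: "a + tau^(k+1) \<in> PtsC (LI r (a + tau^(k+1)) (k+2)) (a + tau^(k+1) + tau^(k+2))"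
    by (rule chain_start[OF LI_chain])
  hence m': "a + tau^(k+1) \<in> PtsC (LI r (a + tau^(k+1)) (k+2)) (a + tau^k)" unfolding e .
  have "Pts (Y l r) a k = fst ` set (LI l a (k+1)) \<union> PtsC (LI r (a + tau^(k+1)) (k+2)) (a + tau^k)"
    unfolding Pts_def by (simp add: PtsC_append)
  moreover have "Pts l a (k+1) \<union> Pts r (a + tau^(k+1)) (k+2) =
     fst ` set (LI l a (k+1)) \<union> {a + tau^(k+1)} \<union> PtsC (LI r (a + tau^(k+1)) (k+2)) (a + tau^k)"
    unfolding Pts_def e by (simp add: PtsC_def)
  ultimately show ?thesis using m' by auto
qed

lemma Pts_Leaf: "Pts Leaf a k = {a, a + tau^k}" unfolding Pts_def by auto

lemma un_split: "(a::real) \<le> m \<Longrightarrow> m \<le> b \<Longrightarrow>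
  {y \<in> Z. a \<le> y \<and> y \<le> m \<and> lo \<le> c y \<and> c y \<le> hi} \<union> {y \<in> Z. m \<le> y \<and> y \<le> b \<and> lo \<le> c y \<and> c y \<le> hi}
   = {y \<in> Z. a \<le> y \<and> y \<le> b \<and> lo \<le> c y \<and> c y \<le> hi}"
  by auto

lemma lin1: "(x::real) = 3*B - 3*V \<Longrightarrow> 1 - t \<le> V \<Longrightarrow> 3*B \<le> n+1 \<Longrightarrow> t < 13/20 \<Longrightarrow> x \<le> n"
  by linarith
lemma lin2: "(x::real) = 3*B - 3*V \<Longrightarrow> t \<le> V \<Longrightarrow> 3*B \<le> n+1 \<Longrightarrow> 3/5 < t \<Longrightarrow> x \<le> n"
  by linarith
lemma lin3: "2 * (1 + 2 * (t::real)) \<le> w \<Longrightarrow> w < 2 + t \<Longrightarrow> 3/5 < t \<Longrightarrow> False"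
  by (simp add: algebra_simps)
lemma lin4: "w \<le> -2 * (1 + 2 * (t::real)) \<Longrightarrow> w > -(2 + t) \<Longrightarrow> 3/5 < t \<Longrightarrow> False"
  by (simp add: algebra_simps)

lemma tb2: "3/5 < tau" "tau < 13/20" using tau_bounds by simp_all

lemma NT:
  assumes "z \<in> Ztau" "0 < z" "z < 1" "- (1 + tau) < cj z" "cj z < 2 + tau"
  shows False
proof -
  obtain a b where z: "z = of_int a + of_int b * tau" using assms(1) Ztau_iff by blast
  have cz: "cj z = of_int a - of_int b * (1 + tau)" unfolding z by (rule cj_eq)
  have "z - cj z = z - (of_int a - of_int b * (1 + tau))" by (simp only: cz)
  also have "\<dots> = of_int b * (1 + 2 * tau)" by (simp add: z algebra_simps)
  finally have d: "z - cj z = of_int b * (1 + 2 * tau)" .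
  have tb: "3/5 < tau" "tau < 13/20" by (rule tb2)+
  have b1: "b \<le> 1"
  proof (rule ccontr)
    assume "\<not> b \<le> 1"
    hence "(2::real) \<le> of_int b" by simp
    hence f1: "2 * (1 + 2*tau) \<le> of_int b * (1 + 2 * tau)" using tb by (intro mult_right_mono) auto
    have f2: "of_int b * (1 + 2 * tau) < 2 + tau" using d assms(3,4) by linarith
    show False by (rule lin3[OF f1 f2 tb(1)])
  qed
  have b2: "-1 \<le> b"
  proof (rule ccontr)
    assume "\<not> -1 \<le> b"
    hence "of_int b \<le> (-2::real)" by simp
    hence f1: "of_int b * (1 + 2 * tau) \<le> -2 * (1 + 2*tau)" using tb by (intro mult_right_mono) auto
    have f2: "of_int b * (1 + 2 * tau) > - (2 + tau)" using d assms(2,5) by linarith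
    show False by (rule lin4[OF f1 f2 tb(1)])
  qed
  have "b = -1 \<or> b = 0 \<or> b = 1" using b1 b2 by auto
  thus False
  proof (elim disjE)
    assume b: "b = -1"
    hence "tau < of_int a" "of_int a < 1 + tau" using assms(2,3) z by auto
    hence "(0::real) < of_int a" "of_int a < (2::real)" using tb by linarith+
    hence "0 < a" "a < 2" by simp_all
    hence "a = 1" by linarith
    thus False using assms(5) cz b by simp
  next
    assume b: "b = 0"
    have h1: "0 < (of_int a::real)" using assms(2) z b by simp
    have h2: "(of_int a::real) < 1" using assms(3) z b by simp
    from h1 have "0 < a" by simp
    moreover from h2 have "a < 1" by simp
    ultimately show False by linarith
  next
    assume b: "b = 1"
    hence "- tau < of_int a" "of_int a < 1 - tau" using assms(2,3) z by auto
    hence "(-1::real) < of_int a" "of_int a < (1::real)" using tb by linarith+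
    hence "-1 < a" "a < 1" by simp_all
    hence "a = 0" by linarith
    thus False using assms(4) cz b by simp
  qed
qed

lemma convex_win:
  fixes A s t t1 t2 lo hi :: real
  assumes "lo \<le> A + s*t1" "A + s*t1 \<le> hi" "lo \<le> A + s*t2" "A + s*t2 \<le> hi" "t1 \<le> t" "t \<le> t2"
  shows "lo \<le> A + s*t \<and> A + s*t \<le> hi"
proof (cases "0 \<le> s")
  case True
  have "s*t1 \<le> s*t" "s*t \<le> s*t2" using True assms(5,6) by (simp_all add: mult_left_mono)
  then show ?thesis using assms by linarith
next
  case False
  have "s*t \<le> s*t1" "s*t2 \<le> s*t" using False assms(5,6) by (simp_all add: mult_left_mono_neg)
  then show ?thesis using assms by linarith
qed

lemma C_pow_tau: "(1 + tau)^k * tau^k = 1"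
  using tau_C by (simp add: power_mult_distrib[symmetric] mult.commute)

lemma Ztau_C_pow: "(1 + tau)^k \<in> Ztau"
  by (induction k) (simp_all add: Ztau_1 Ztau_mult Ztau_tau Ztau_add)

lemma cj_tau_shift: "a \<in> Ztau \<Longrightarrow> z \<in> Ztau \<Longrightarrow> cj (a + tau^k * z) = cj a + (- (1 + tau))^k * cj z"
  by (simp add: cj_add cj_mult Ztau_mult Ztau_pow cj_pow)

lemma cj_tau_pow_add: "a \<in> Ztau \<Longrightarrow> cj (a + tau^k) = cj a + (- (1 + tau))^k"
  by (simp add: cj_add Ztau_pow cj_pow)

lemma abs_C_pow: "\<bar>(- (1 + tau))^k\<bar> = (1 + tau)^k"
proof -
  have "\<bar>(- (1 + tau))^k\<bar> = \<bar>- (1 + tau)\<bar>^k" by (rule power_abs)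
  moreover have "\<bar>- (1 + tau)\<bar> = 1 + tau" using tau_pos by (smt (verit))
  ultimately show ?thesis by (simp only:)
qed

lemma window_tree:
  assumes "a \<in> Ztau" "lo \<le> cj a" "cj a \<le> hi" "lo \<le> cj (a + tau^k)" "cj (a + tau^k) \<le> hi"
  shows "\<exists>t. Pts t a k = {y \<in> Ztau. a \<le> y \<and> y \<le> a + tau^k \<and> lo \<le> cj y \<and> cj y \<le> hi}"
proof -
  obtain n :: nat where n: "3 * (hi - lo) * tau^k \<le> real n" using real_arch_simple by blast
  show ?thesis using assms n
  proof (induction n arbitrary: a k)
    case 0
    have "(1 + tau)^k \<le> hi - lo"
    proof -
      have "cj (a + tau^k) = cj a + (- (1 + tau))^k" using cj_tau_pow_add[OF "0.prems"(1)] .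
      hence "\<bar>(- (1 + tau))^k\<bar> \<le> hi - lo" using "0.prems" by linarith
      thus ?thesis by (simp only: abs_C_pow)
    qed
    hence "(1 + tau)^k * tau^k \<le> (hi - lo) * tau^k" using tau_pos by (intro mult_right_mono) auto
    hence "1 \<le> (hi - lo) * tau^k" using C_pow_tau by simp
    then show ?case using "0.prems"(6) by simp
  next
    case (Suc n)
    note pr = Suc.prems
    let ?S = "\<lambda>a k. {y \<in> Ztau. a \<le> y \<and> y \<le> a + tau^k \<and> lo \<le> cj y \<and> cj y \<le> hi}"
    have big: "1 \<le> (hi - lo) * tau^k"
    proof -
      have "cj (a + tau^k) = cj a + (- (1 + tau))^k" using cj_tau_pow_add[OF pr(1)] .
      hence "\<bar>(- (1 + tau))^k\<bar> \<le> hi - lo" using pr by linarith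
      hence "(1 + tau)^k \<le> hi - lo" by (simp only: abs_C_pow)
      hence "(1 + tau)^k * tau^k \<le> (hi - lo) * tau^k" using tau_pos by (intro mult_right_mono) auto
      thus ?thesis using C_pow_tau by simp
    qed
    have tb: "3/5 < tau" "tau < 13/20" by (rule tb2)+
    have tsq: "tau * tau = 1 - tau" by (rule tau_sq)
    have p1: "tau^(k+1) = tau^k * tau" and p2: "tau^(k+2) = tau^k * (tau * tau)" by (simp_all add: power_add power2_eq_square)
    define B where "B = (hi - lo) * tau^k"
    have e3: "3 * B = 3 * (hi - lo) * tau^k" unfolding B_def by (simp only: mult.assoc)
    have B6: "3 * B \<le> real n + 1" unfolding e3 using pr(6) by simp
    have B1: "1 \<le> B" using big unfolding B_def .
    have m1: "3 * (hi - lo) * tau^(k+1) \<le> real n"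
    proof -
      have f1: "3 * (hi - lo) * tau^(k+1) = 3 * B - 3 * (B * (1 - tau))"
        unfolding B_def p1 by (simp add: algebra_simps)
      have "1 * (1 - tau) \<le> B * (1 - tau)"
        using B1 tb by (intro mult_right_mono) auto
      hence f2: "1 - tau \<le> B * (1 - tau)" by simp
      show ?thesis by (rule lin1[OF f1 f2 B6 tb(2)])
    qed
    have m2: "3 * (hi - lo) * tau^(k+2) \<le> real n"
    proof -
      have f1: "3 * (hi - lo) * tau^(k+2) = 3 * B - 3 * (B * tau)"
        unfolding B_def p2 tsq by (simp add: algebra_simps)
      have "1 * tau \<le> B * tau"
        using B1 tb by (intro mult_right_mono) auto
      hence f2: "tau \<le> B * tau" by simp
      show ?thesis by (rule lin2[OF f1 f2 B6 tb(1)])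
    qed
    have Za1: "a + tau^(k+1) \<in> Ztau" "a + tau^(k+2) \<in> Ztau" using pr(1) by (blast intro: Ztau_add Ztau_pow)+
    have e1: "a + tau^(k+2) + tau^(k+1) = a + tau^k" using tau_split[of k] by simp
    have pos: "0 < tau^(k+1)" "0 < tau^(k+2)" using tau_pos by simp_all
    show ?case
    proof (cases "lo \<le> cj (a + tau^(k+2)) \<and> cj (a + tau^(k+2)) \<le> hi")
      case True
      obtain t1 where t1: "Pts t1 a (k+2) = ?S a (k+2)"
        using Suc.IH[OF pr(1-3) conjunct1[OF True] conjunct2[OF True] m2] by blast
      have w4: "lo \<le> cj (a + tau^(k+2) + tau^(k+1))" "cj (a + tau^(k+2) + tau^(k+1)) \<le> hi"
        unfolding e1 by (rule pr(4), rule pr(5))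
      obtain t2 where t2: "Pts t2 (a + tau^(k+2)) (k+1) = ?S (a + tau^(k+2)) (k+1)"
        using Suc.IH[OF Za1(2) conjunct1[OF True] conjunct2[OF True] w4 m1] by blast
      have "Pts (X t1 t2) a k = ?S a k"
        unfolding Pts_X t1 t2 e1[symmetric] using pos by (intro un_split) auto
      then show ?thesis by blast
    next
      case nX: False
      show ?thesis
      proof (cases "lo \<le> cj (a + tau^(k+1)) \<and> cj (a + tau^(k+1)) \<le> hi")
        case True
        have e2: "a + tau^(k+1) + tau^(k+2) = a + tau^k" using tau_split[of k] by simp
        obtain t1 where t1: "Pts t1 a (k+1) = ?S a (k+1)"
          using Suc.IH[OF pr(1-3) conjunct1[OF True] conjunct2[OF True] m1] by blast
        have w4: "lo \<le> cj (a + tau^(k+1) + tau^(k+2))" "cj (a + tau^(k+1) + tau^(k+2)) \<le> hi"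
          unfolding e2 by (rule pr(4), rule pr(5))
        obtain t2 where t2: "Pts t2 (a + tau^(k+1)) (k+2) = ?S (a + tau^(k+1)) (k+2)"
          using Suc.IH[OF Za1(1) conjunct1[OF True] conjunct2[OF True] w4 m2] by blast
        have "Pts (Y t1 t2) a k = ?S a k"
          unfolding Pts_Y t1 t2 e2[symmetric] using pos by (intro un_split) auto
        then show ?thesis by blast
      next
        case nY: False
        have "Pts Leaf a k = ?S a k"
        proof
          show "Pts Leaf a k \<subseteq> ?S a k"
            unfolding Pts_Leaf using pr(1-5) Za1 tau_pos by (auto simp: Ztau_add Ztau_pow)
        next
          show "?S a k \<subseteq> Pts Leaf a k"
          proof
            fix y assume y: "y \<in> ?S a k"
            show "y \<in> Pts Leaf a k"
            proof (rule ccontr)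
              assume "y \<notin> Pts Leaf a k"
              hence yin: "a < y" "y < a + tau^k" using y unfolding Pts_Leaf by auto
              define z where "z = (y - a) * (1 + tau)^k"
              have Zz: "z \<in> Ztau" unfolding z_def using y pr(1) by (simp add: Ztau_mult Ztau_diff Ztau_C_pow)
              have yz: "y = a + tau^k * z" unfolding z_def using C_pow_tau[of k] by (simp add: algebra_simps)
              have tk: "0 < tau^k" using tau_pos by simp
              have z0: "0 < z" unfolding z_def using yin tau_pos by simp
              have z1: "z < 1"
              proof -
                have "tau^k * z < tau^k * 1" using yz yin by simp
                thus ?thesis using tk by simp
              qed
              let ?s = "(- (1 + tau))^k"
              have cy: "cj y = cj a + ?s * cj z" unfolding yz by (rule cj_tau_shift[OF pr(1) Zz])
              have c0: "cj a = cj a + ?s * 0" by simp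
              have c1: "cj (a + tau^k) = cj a + ?s * 1" using cj_tau_pow_add[OF pr(1)] by simp
              have cX: "cj (a + tau^(k+2)) = cj a + ?s * (2 + tau)"
              proof -
                have "cj (a + tau^(k+2)) = cj a + (- (1 + tau))^(k+2)" by (rule cj_tau_pow_add[OF pr(1)])
                moreover have "(- (1 + tau))^(k+2) = ?s * ((1 + tau) * (1 + tau))"
                proof -
                  have "(- (1 + tau))^(k+2) = ?s * ((- (1 + tau)) * (- (1 + tau)))" by (simp only: power_add power2_eq_square)
                  thus ?thesis by (simp only: minus_mult_minus)
                qed
                moreover have "(1 + tau) * (1 + tau) = 2 + tau" using tsq by (simp add: algebra_simps)
                ultimately show ?thesis by simp
              qed
              have cY: "cj (a + tau^(k+1)) = cj a + ?s * (- (1 + tau))"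
                using cj_tau_pow_add[OF pr(1), of "k+1"] by (simp add: power_add)
              have wy: "lo \<le> cj a + ?s * cj z" "cj a + ?s * cj z \<le> hi" using y cy by auto
              have w0: "lo \<le> cj a + ?s * 0" "cj a + ?s * 0 \<le> hi" using pr(2,3) by simp_all
              have w1: "lo \<le> cj a + ?s * 1" "cj a + ?s * 1 \<le> hi" using pr(4,5) c1 by simp_all
              have lo_z: "- (1 + tau) < cj z"
              proof (rule ccontr)
                assume "\<not> - (1 + tau) < cj z"
                hence "cj z \<le> - (1 + tau)" by simp
                from convex_win[OF wy w0 this] tau_pos have "lo \<le> cj a + ?s * (- (1 + tau)) \<and> cj a + ?s * (- (1 + tau)) \<le> hi"
                  by simp
                thus False using nY cY by simp
              qed
              have hi_z: "cj z < 2 + tau"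
              proof (rule ccontr)
                assume "\<not> cj z < 2 + tau"
                hence "2 + tau \<le> cj z" by simp
                from convex_win[OF w1 wy _ this] tau_pos have "lo \<le> cj a + ?s * (2 + tau) \<and> cj a + ?s * (2 + tau) \<le> hi"
                  by simp
                thus False using nX cX by simp
              qed
              show False by (rule NT[OF Zz z0 z1 lo_z hi_z])
            qed
          qed
        qed
        then show ?thesis by blast
      qed
    qed
  qed
qed

lemma refine_chain:
  assumes "chain p L E" "p \<in> Ztau" "\<And>y. y \<in> PtsC L E \<Longrightarrow> lo \<le> cj y \<and> cj y \<le> hi"
  shows "\<exists>ts. length ts = length L \<and>
    PtsC (BL L ts) E = {y \<in> Ztau. p \<le> y \<and> y \<le> E \<and> lo \<le> cj y \<and> cj y \<le> hi}"
  using assms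
proof (induction L arbitrary: p)
  case Nil
  then show ?case by auto
next
  case (Cons h L)
  obtain a k where h: "h = (a,k)" by fastforce
  from Cons.prems(1) h have c: "a = p" "chain (p + tau^k) L E" by auto
  have Z1: "p + tau^k \<in> Ztau" using Cons.prems(2) by (simp add: Ztau_add Ztau_pow)
  have w: "\<And>y. y \<in> PtsC L E \<Longrightarrow> lo \<le> cj y \<and> cj y \<le> hi" using Cons.prems(3) h by simp
  obtain ts where ts: "length ts = length L"
    "PtsC (BL L ts) E = {y \<in> Ztau. p + tau^k \<le> y \<and> y \<le> E \<and> lo \<le> cj y \<and> cj y \<le> hi}"
    using Cons.IH[OF c(2) Z1 w] by blast
  have wp: "lo \<le> cj p \<and> cj p \<le> hi" using Cons.prems(3) h c by simp
  have wp1: "lo \<le> cj (p + tau^k) \<and> cj (p + tau^k) \<le> hi" using w chain_start[OF c(2)] by simp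
  obtain t where t: "Pts t p k = {y \<in> Ztau. p \<le> y \<and> y \<le> p + tau^k \<and> lo \<le> cj y \<and> cj y \<le> hi}"
    using window_tree[OF Cons.prems(2)] wp wp1 by blast
  have ch: "chain (p + tau^k) (BL L ts) E" using chain_BL[OF c(2)] ts(1) by simp
  have st: "p + tau^k \<in> PtsC (BL L ts) E" by (rule chain_start[OF ch])
  have le: "p + tau^k \<le> E" using chain_le[OF c(2)] .
  have "PtsC (BL (h#L) (t#ts)) E = fst ` set (LI t p k) \<union> PtsC (BL L ts) E"
    using h c by (simp add: PtsC_append)
  also have "\<dots> = Pts t p k \<union> PtsC (BL L ts) E" using st unfolding Pts_def PtsC_def by auto
  also have "\<dots> = {y \<in> Ztau. p \<le> y \<and> y \<le> E \<and> lo \<le> cj y \<and> cj y \<le> hi}"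
    unfolding t ts(2) using le zero_less_power[OF tau_pos, of k] by (intro un_split) auto
  finally show ?case using ts(1) by (intro exI[of _ "t#ts"]) simp
qed

definition TPset :: "(real \<Rightarrow> real) set" where
  "TPset = {f. \<exists>T1 T2. nleaves T1 = nleaves T2 \<and> f = tree_pair T1 T2}"

lemma LI_chain01: "chain 0 (LI T 0 0) 1"
  using LI_chain[of 0 T 0] by simp

lemma Pts01: "Pts T 0 0 = PtsC (LI T 0 0) 1" unfolding Pts_def by simp

lemma win_fin:
  assumes "finite P" "y \<in> P"
  shows "Min (cj ` P) \<le> cj y \<and> cj y \<le> Max (cj ` P)"
proof
  show "Min (cj ` P) \<le> cj y" using assms by (intro Min_le) simp_all
  show "cj y \<le> Max (cj ` P)" using assms by (intro Max_ge) simp_all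
qed

lemma nleaves_subst:
  assumes "length ts = nleaves T" shows "nleaves (subst T ts) = sum_list (map nleaves ts)"
proof -
  have "nleaves (subst T ts) = length (LI (subst T ts) 0 0)" by (rule nleaves_LI)
  also have "\<dots> = length (BL (LI T 0 0) ts)" using LI_subst[OF assms] by simp
  also have "\<dots> = sum_list (map nleaves ts)" using length_BL[of "LI T 0 0" ts] assms by (simp add: LI_length)
  finally show ?thesis .
qed

lemma common_refine:
  assumes n12: "nleaves T1 = nleaves T2" and n34: "nleaves T3 = nleaves T4"
  shows "tree_pair T3 T4 \<circ> tree_pair T1 T2 \<in> TPset"
proof -
  let ?P = "PtsC (LI T2 0 0) 1 \<union> PtsC (LI T3 0 0) 1"
  let ?lo = "Min (cj ` ?P)" and ?hi = "Max (cj ` ?P)"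
  have fin: "finite ?P" by (simp add: finite_PtsC)
  have w2: "\<And>y. y \<in> PtsC (LI T2 0 0) 1 \<Longrightarrow> ?lo \<le> cj y \<and> cj y \<le> ?hi"
    using win_fin[OF fin] by blast
  have w3: "\<And>y. y \<in> PtsC (LI T3 0 0) 1 \<Longrightarrow> ?lo \<le> cj y \<and> cj y \<le> ?hi"
    using win_fin[OF fin] by blast
  obtain ts where ts: "length ts = length (LI T2 0 0)"
    "PtsC (BL (LI T2 0 0) ts) 1 = {y \<in> Ztau. 0 \<le> y \<and> y \<le> 1 \<and> ?lo \<le> cj y \<and> cj y \<le> ?hi}"
    using refine_chain[OF LI_chain01 Ztau_0 w2] by blast
  obtain ss where ss: "length ss = length (LI T3 0 0)"
    "PtsC (BL (LI T3 0 0) ss) 1 = {y \<in> Ztau. 0 \<le> y \<and> y \<le> 1 \<and> ?lo \<le> cj y \<and> cj y \<le> ?hi}"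
    using refine_chain[OF LI_chain01 Ztau_0 w3] by blast
  have eqBL: "BL (LI T2 0 0) ts = BL (LI T3 0 0) ss"
    using chain_unique[OF chain_BL[OF LI_chain01 ts(1)] chain_BL[OF LI_chain01 ss(1)]] ts(2) ss(2) by simp
  have lts: "length ts = nleaves T2" "length ss = nleaves T3" using ts(1) ss(1) by (simp_all add: LI_length)
  have eqLI: "LI (subst T2 ts) 0 0 = LI (subst T3 ss) 0 0"
    using eqBL LI_subst[OF lts(1)] LI_subst[OF lts(2)] by simp
  have e1: "tree_pair T1 T2 = tree_pair (subst T1 ts) (subst T2 ts)"
    using subst_tp[of ts T1 T2] lts n12 by simp
  have e2: "tree_pair T3 T4 = tree_pair (subst T3 ss) (subst T4 ss)"
    using subst_tp[of ss T3 T4] lts n34 by simp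
  have e3: "tree_pair (subst T3 ss) (subst T4 ss) = tree_pair (subst T2 ts) (subst T4 ss)"
    unfolding tree_pair_def eqLI ..
  have na: "nleaves (subst T1 ts) = nleaves (subst T2 ts)"
    using nleaves_subst lts n12 by simp
  have nb: "nleaves (subst T2 ts) = nleaves (subst T3 ss)" unfolding nleaves_LI eqLI ..
  have nc: "nleaves (subst T3 ss) = nleaves (subst T4 ss)"
    using nleaves_subst lts n34 by simp
  have "tree_pair T3 T4 \<circ> tree_pair T1 T2 = tree_pair (subst T1 ts) (subst T4 ss)"
    unfolding e1 e2 e3 using na nb nc by (intro tp_comp) simp_all
  thus ?thesis unfolding TPset_def using na nb nc by auto
qed

lemma G_TP: "f \<in> generated (range xgen \<union> range ygen) \<Longrightarrow> f \<in> TPset"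
proof (induction rule: generated.induct)
  case gen_id
  have "id = tree_pair Leaf Leaf" by (rule tp_id[symmetric])
  thus ?case unfolding TPset_def by blast
next
  case (gen_base s)
  then obtain n where "s = xgen n \<or> s = ygen n" by auto
  then show ?case
  proof
    assume s: "s = xgen n"
    have "nleaves (rs n (X (X Leaf Leaf) Leaf)) = nleaves (rs n (X Leaf (X Leaf Leaf)))" by simp
    thus ?thesis unfolding TPset_def s xgen_rs by blast
  next
    assume s: "s = ygen n"
    have "nleaves (rs n (X (Y Leaf Leaf) Leaf)) = nleaves (rs n (X Leaf (X Leaf Leaf)))" by simp
    thus ?thesis unfolding TPset_def s ygen_rs by blast
  qed
next
  case (gen_comp f g)
  then obtain T1 T2 T3 T4 where "nleaves T1 = nleaves T2" "g = tree_pair T1 T2"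
    "nleaves T3 = nleaves T4" "f = tree_pair T3 T4" unfolding TPset_def by auto
  then show ?case using common_refine by (simp only:)
next
  case (gen_inv f)
  then obtain T1 T2 where n: "nleaves T1 = nleaves T2" and f: "f = tree_pair T1 T2" unfolding TPset_def by auto
  have "inv f = tree_pair T2 T1" unfolding f by (rule tp_inv[OF n])
  moreover have "nleaves T2 = nleaves T1" using n by simp
  ultimately show ?case unfolding TPset_def by blast
qed

lemma agree_ends:
  "length L = length M \<Longrightarrow> agree f L M \<Longrightarrow> chain p L E \<Longrightarrow> chain q M E' \<Longrightarrow> L \<noteq> [] \<Longrightarrow> f E = E'"
proof (induction L M arbitrary: p q rule: list_induct2)
  case Nil then show ?case by simp
next
  case (Cons h L h' M)
  obtain a k where h: "h = (a,k)" by fastforce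
  obtain b m where h': "h' = (b,m)" by fastforce
  from Cons.prems h h' have c: "a = p" "chain (p + tau^k) L E" "b = q" "chain (q + tau^m) M E'"
    and ag: "\<forall>x. p \<le> x \<and> x \<le> p + tau^k \<longrightarrow> f x = q + tau powi (int m - int k) * (x - p)" "agree f L M"
    by (auto simp: agree_Cons)
  show ?case
  proof (cases "L = []")
    case True
    hence "M = []" using Cons.hyps by simp
    hence "E = p + tau^k" "E' = q + tau^m" using True c by simp_all
    moreover have "f (p + tau^k) = q + tau^m" using ag(1) powi_cancel[of m k] tau_pos by simp
    ultimately show ?thesis by simp
  next
    case False
    show ?thesis by (rule Cons.IH[OF ag(2) c(2) c(4) False])
  qed
qed

lemma agree_start: "agree f ((p,k)#L) ((q,m)#M) \<Longrightarrow> f p = q"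
  unfolding agree_Cons using tau_pos by force

lemma chain_sorted: "chain p L E \<Longrightarrow> sorted_wrt (<) (map fst L @ [E])"
proof (induction L arbitrary: p)
  case Nil then show ?case by simp
next
  case (Cons h L)
  obtain a k where h: "h = (a,k)" by fastforce
  from Cons.prems h have c: "a = p" "chain (p + tau^k) L E" by auto
  have "\<forall>y\<in>set (map fst L @ [E]). p < y"
  proof
    fix y assume "y \<in> set (map fst L @ [E])"
    hence "y \<in> PtsC L E" unfolding PtsC_def by auto
    from chain_ge[OF c(2) this] show "p < y" using tau_pos by (smt (verit) zero_less_power)
  qed
  then show ?case using Cons.IH[OF c(2)] h c by simp
qed

lemma chain_nth: "chain p L E \<Longrightarrow> i < length L \<Longrightarrow> (map fst L @ [E]) ! Suc i = fst (L!i) + tau^(snd (L!i))"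
proof (induction L arbitrary: p i)
  case Nil then show ?case by simp
next
  case (Cons h L)
  obtain a k where h: "h = (a,k)" by fastforce
  from Cons.prems h have c: "a = p" "chain (p + tau^k) L E" by auto
  show ?case
  proof (cases i)
    case 0
    then show ?thesis using c h by (cases L) auto
  next
    case (Suc j)
    then show ?thesis using Cons.IH[OF c(2), of j] Cons.prems(2) h by simp
  qed
qed

lemma TP_Ftau:
  assumes "nleaves T1 = nleaves T2"
  shows "tree_pair T1 T2 \<in> Ftau"
proof -
  let ?f = "tree_pair T1 T2"
  let ?L = "LI T1 0 0" and ?M = "LI T2 0 0"
  have cL: "chain 0 ?L 1" and cM: "chain 0 ?M 1" by (rule LI_chain01)+
  have ag: "agree ?f ?L ?M" by (rule tp_agree[OF assms])
  have len: "length ?L = length ?M" using assms by (simp add: LI_length)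
  define ps where "ps = map fst ?L @ [1]"
  define es where "es = map (\<lambda>((p,k),(q,m)). int m - int k) (zip ?L ?M)"
  have nL: "?L \<noteq> []" by (rule LI_nonempty)
  obtain k0 L' where L: "?L = (0,k0)#L'" using cL nL by (cases "?L") auto
  obtain m0 M' where M: "?M = (0,m0)#M'" using cM len L by (cases "?M") auto
  have f0: "?f 0 = 0" using agree_start[of ?f 0 k0 L' 0 m0 M'] ag L M by simp
  have f1: "?f 1 = 1" by (rule agree_ends[OF len ag cL cM nL])
  have out: "\<forall>x. x \<notin> {0..1} \<longrightarrow> ?f x = x" using tp_outside by auto
  have lens: "length ps = length es + 1" unfolding ps_def es_def using len by simp
  have hd: "hd ps = 0" unfolding ps_def using L by simp
  have lst: "last ps = 1" unfolding ps_def by simp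
  have srt: "sorted_wrt (<) ps" unfolding ps_def by (rule chain_sorted[OF cL])
  have Z: "set ps \<subseteq> Ztau"
  proof
    fix y assume "y \<in> set ps"
    hence "y \<in> PtsC ?L 1" unfolding ps_def PtsC_def by auto
    thus "y \<in> Ztau" by (rule chain_Ztau[OF cL Ztau_0])
  qed
  have seg: "\<forall>i < length es. \<forall>x \<in> {ps ! i .. ps ! (i+1)}. ?f x = ?f (ps ! i) + tau powi (es ! i) * (x - ps ! i)"
  proof (intro allI impI ballI)
    fix i x assume i: "i < length es" and x: "x \<in> {ps ! i .. ps ! (i+1)}"
    have iL: "i < length ?L" using i len unfolding es_def by simp
    obtain p k where Li: "?L ! i = (p,k)" by fastforce
    obtain q m where Mi: "?M ! i = (q,m)" by fastforce
    have pi: "ps ! i = p" unfolding ps_def using iL Li by (simp add: nth_append)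
    have pi1: "ps ! (i+1) = p + tau^k" unfolding ps_def using chain_nth[OF cL iL] Li by simp
    have ei: "es ! i = int m - int k" unfolding es_def using iL len Li Mi by simp
    have fx: "?f x = q + tau powi (int m - int k) * (x - p)"
      using agree_nth[OF ag iL Li Mi] x pi pi1 by simp
    have fp: "?f p = q" using agree_nth[OF ag iL Li Mi, of p] tau_pos by simp
    show "?f x = ?f (ps ! i) + tau powi (es ! i) * (x - ps ! i)" using fx fp pi ei by simp
  qed
  show ?thesis unfolding Ftau_def using out f0 f1 lens hd lst srt Z seg by blast
qed



lemma sorted_bounds: "sorted_wrt (<) (ps::real list) \<Longrightarrow> y \<in> set ps \<Longrightarrow> hd ps \<le> y \<and> y \<le> last ps"
proof (induction ps)
  case Nil then show ?case by simp
next
  case (Cons a ps)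
  show ?case
  proof (cases "ps = []")
    case True then show ?thesis using Cons by simp
  next
    case False
    have "last ps \<in> set ps" using False by simp
    hence al: "a < last ps" using Cons.prems(1) by simp
    show ?thesis
    proof (cases "y = a")
      case True then show ?thesis using al False by simp
    next
      case ne: False
      hence "y \<in> set ps" using Cons.prems(2) by simp
      hence "a < y" "y \<le> last ps" using Cons.IH Cons.prems(1) by auto
      then show ?thesis using False by simp
    qed
  qed
qed

lemma sorted_segment:
  "sorted_wrt (<) (ps::real list) \<Longrightarrow> ps \<noteq> [] \<Longrightarrow> hd ps \<le> x \<Longrightarrow> x < last ps \<Longrightarrow>
   \<exists>i. Suc i < length ps \<and> ps ! i \<le> x \<and> x < ps ! Suc i"
proof (induction ps)
  case Nil then show ?case by simp
next
  case (Cons a ps)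
  show ?case
  proof (cases "ps = []")
    case True then show ?thesis using Cons.prems by simp
  next
    case False
    show ?thesis
    proof (cases "x < hd ps")
      case True
      then show ?thesis using Cons.prems False by (intro exI[of _ 0]) (simp add: hd_conv_nth)
    next
      case ge: False
      have "sorted_wrt (<) ps" using Cons.prems(1) by simp
      from Cons.IH[OF this False] ge Cons.prems(4) False obtain i where
        "Suc i < length ps" "ps ! i \<le> x" "x < ps ! Suc i" by auto
      then show ?thesis by (intro exI[of _ "Suc i"]) simp
    qed
  qed
qed

lemma chain_gap: "chain q L E \<Longrightarrow> (p,k) \<in> set L \<Longrightarrow> y \<in> PtsC L E \<Longrightarrow> y \<le> p \<or> p + tau^k \<le> y"
proof (induction L arbitrary: q)
  case Nil then show ?case by simp
next
  case (Cons h L)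
  obtain a k0 where h: "h = (a,k0)" by fastforce
  from Cons.prems(1) h have c: "a = q" "chain (q + tau^k0) L E" by auto
  show ?case
  proof (cases "(p,k) = h")
    case True
    hence pk: "p = q" "k = k0" using h c by auto
    show ?thesis
    proof (cases "y = q")
      case True then show ?thesis using pk by simp
    next
      case False
      hence "y \<in> PtsC L E" using Cons.prems(3) h c by simp
      from chain_ge[OF c(2) this] show ?thesis using pk by simp
    qed
  next
    case False
    hence mem: "(p,k) \<in> set L" using Cons.prems(2) by simp
    show ?thesis
    proof (cases "y = q")
      case True
      have "q + tau^k0 \<le> p" using chain_bounds[OF c(2) mem] by simp
      then show ?thesis using True tau_pos by (smt (verit) zero_less_power)
    next
      case ne: False
      hence "y \<in> PtsC L E" using Cons.prems(3) h c by simp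
      from Cons.IH[OF c(2) mem this] show ?thesis .
    qed
  qed
qed

lemma powi_ge: "tau powi e \<le> 1 \<Longrightarrow> 0 \<le> e"
proof (rule ccontr)
  assume a: "tau powi e \<le> 1" "\<not> 0 \<le> e"
  hence "tau powi e = (1 + tau) ^ nat (- e)" by (simp add: power_int_def inv_tau)
  moreover have "1 < (1 + tau) ^ nat (- e)" using a(2) tau_pos by (intro one_less_power) auto
  ultimately show False using a(1) by simp
qed

lemma chain_fmono:
  fixes f :: "real \<Rightarrow> real"
  shows "chain p L E \<Longrightarrow> (\<And>a k. (a,k) \<in> set L \<Longrightarrow> f a \<le> f (a + tau^k)) \<Longrightarrow> f p \<le> f E"
proof (induction L arbitrary: p)
  case Nil then show ?case by simp
next
  case (Cons h L)
  obtain a k where h: "h = (a,k)" by fastforce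
  from Cons.prems(1) h have c: "a = p" "chain (p + tau^k) L E" by auto
  have "f (p + tau^k) \<le> f E" using Cons.IH[OF c(2)] Cons.prems(2) by simp
  moreover have "f p \<le> f (p + tau^k)" using Cons.prems(2)[of p k] h c by simp
  ultimately show ?case by simp
qed

lemma chain_fbounds:
  fixes f :: "real \<Rightarrow> real"
  shows "chain p L E \<Longrightarrow> (\<And>a k. (a,k) \<in> set L \<Longrightarrow> f a \<le> f (a + tau^k)) \<Longrightarrow> (b,j) \<in> set L \<Longrightarrow>
    f p \<le> f b \<and> f (b + tau^j) \<le> f E"
proof (induction L arbitrary: p)
  case Nil then show ?case by simp
next
  case (Cons h L)
  obtain a k where h: "h = (a,k)" by fastforce
  from Cons.prems(1) h have c: "a = p" "chain (p + tau^k) L E" by auto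
  have m: "f p \<le> f (p + tau^k)" using Cons.prems(2)[of p k] h c by simp
  have tl: "\<And>a k. (a,k) \<in> set L \<Longrightarrow> f a \<le> f (a + tau^k)" using Cons.prems(2) by simp
  have mE: "f (p + tau^k) \<le> f E" by (rule chain_fmono[OF c(2) tl])
  show ?case
  proof (cases "(b,j) = h")
    case True then show ?thesis using h c m mE by auto
  next
    case False
    hence "(b,j) \<in> set L" using Cons.prems(3) by simp
    from Cons.IH[OF c(2) tl this] m show ?thesis by simp
  qed
qed

lemma chain_image:
  "chain p L E \<Longrightarrow> (\<And>a k. (a,k) \<in> set L \<Longrightarrow> f (a + tau^k) = f a + tau^(h (a,k))) \<Longrightarrow>
   chain (f p) (map (\<lambda>(a,k). (f a, h (a,k))) L) (f E)"
proof (induction L arbitrary: p)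
  case Nil then show ?case by simp
next
  case (Cons x L)
  obtain a k where x: "x = (a,k)" by fastforce
  from Cons.prems(1) x have c: "a = p" "chain (p + tau^k) L E" by auto
  have "chain (f (p + tau^k)) (map (\<lambda>(a,k). (f a, h (a,k))) L) (f E)"
    using Cons.IH[OF c(2)] Cons.prems(2) by simp
  moreover have "f (p + tau^k) = f p + tau^(h (p,k))" using Cons.prems(2)[of p k] x c by simp
  ultimately show ?case using x c by simp
qed

lemma Ftau_TP:
  assumes "f \<in> Ftau"
  shows "f \<in> TPset"
proof -
  from assms obtain ps es where
    out: "\<forall>x. x \<notin> {0..1} \<longrightarrow> f x = x" and f0: "f 0 = 0" and f1: "f 1 = 1" and
    lens: "length ps = length es + 1" and hd: "hd ps = 0" and lst: "last ps = 1" and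
    srt: "sorted_wrt (<) ps" and Z: "set ps \<subseteq> Ztau" and
    seg: "\<forall>i < length es. \<forall>x \<in> {ps ! i .. ps ! (i+1)}. f x = f (ps ! i) + tau powi (es ! i) * (x - ps ! i)"
    unfolding Ftau_def by blast
  have nps: "ps \<noteq> []" using lens by auto
  have in01: "\<And>y. y \<in> set ps \<Longrightarrow> 0 \<le> y \<and> y \<le> 1" using sorted_bounds[OF srt] hd lst by metis
  have fin1: "finite (set ps)" by simp
  let ?lo = "Min (cj ` set ps)" and ?hi = "Max (cj ` set ps)"
  have w1: "\<And>y. y \<in> set ps \<Longrightarrow> ?lo \<le> cj y \<and> cj y \<le> ?hi" using win_fin[OF fin1] by blast
  have "0 \<in> set ps" using hd nps by (metis list.set_sel(1))
  hence w0: "?lo \<le> cj 0 \<and> cj 0 \<le> ?hi" using w1 by blast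
  have "1 \<in> set ps" using lst nps by (metis last_in_set)
  hence w01: "?lo \<le> cj (0 + tau^0) \<and> cj (0 + tau^0) \<le> ?hi" using w1 by simp
  obtain T1' where T1': "Pts T1' 0 0 = {y \<in> Ztau. 0 \<le> y \<and> y \<le> 0 + tau^0 \<and> ?lo \<le> cj y \<and> cj y \<le> ?hi}"
    using window_tree[OF Ztau_0] w0 w01 by blast
  let ?L = "LI T1' 0 0"
  have cL: "chain 0 ?L 1" by (rule LI_chain01)
  have psP: "set ps \<subseteq> PtsC ?L 1"
  proof
    fix y assume y: "y \<in> set ps"
    have "y \<in> Pts T1' 0 0" unfolding T1' using y Z in01 w1 by auto
    thus "y \<in> PtsC ?L 1" unfolding Pts01 .
  qed
  have aff: "\<exists>e. \<forall>x. p \<le> x \<and> x \<le> p + tau^k \<longrightarrow> f x = f p + tau powi e * (x - p)"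
    if pk: "(p,k) \<in> set ?L" for p k
  proof -
    have b: "0 \<le> p" "p + tau^k \<le> 1" using chain_bounds[OF cL pk] by auto
    have tk: "0 < tau^k" using tau_pos by simp
    have pl: "p < last ps" using b tk lst by linarith
    have hp: "hd ps \<le> p" using hd b by simp
    obtain i where i: "Suc i < length ps" "ps ! i \<le> p" "p < ps ! Suc i"
      using sorted_segment[OF srt nps hp pl] by blast
    have "ps ! Suc i \<in> set ps" by (rule nth_mem[OF i(1)])
    hence "ps ! Suc i \<in> PtsC ?L 1" using psP by blast
    from chain_gap[OF cL pk this] i(3) have up: "p + tau^k \<le> ps ! Suc i" by linarith
    have ie: "i < length es" using i(1) lens by simp
    have segi: "\<forall>x \<in> {ps ! i .. ps ! (i+1)}. f x = f (ps ! i) + tau powi (es ! i) * (x - ps ! i)"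
      using seg ie by blast
    have F: "f x = f (ps ! i) + tau powi (es ! i) * (x - ps ! i)" if "p \<le> x" "x \<le> p + tau^k" for x
    proof -
      have "x \<in> {ps ! i .. ps ! (i+1)}" using that i(2) up by simp
      thus ?thesis using segi by blast
    qed
    have "\<forall>x. p \<le> x \<and> x \<le> p + tau^k \<longrightarrow> f x = f p + tau powi (es ! i) * (x - p)"
    proof (intro allI impI)
      fix x assume x: "p \<le> x \<and> x \<le> p + tau^k"
      have "f x = f (ps ! i) + tau powi (es ! i) * (x - ps ! i)" using F x by simp
      moreover have "f p = f (ps ! i) + tau powi (es ! i) * (p - ps ! i)" using F tk by simp
      ultimately show "f x = f p + tau powi (es ! i) * (x - p)" by (simp add: algebra_simps)
    qed
    thus ?thesis by blast
  qed
  define g where "g = (\<lambda>(p,k). SOME e. \<forall>x. p \<le> x \<and> x \<le> p + tau^k \<longrightarrow> f x = f p + tau powi e * (x - p))"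
  have gspec: "\<forall>x. p \<le> x \<and> x \<le> p + tau^k \<longrightarrow> f x = f p + tau powi (g (p,k)) * (x - p)"
    if pk: "(p,k) \<in> set ?L" for p k
    unfolding g_def case_prod_conv by (rule someI_ex[OF aff[OF pk]])
  have fend: "f (p + tau^k) = f p + tau powi (g (p,k) + int k)" if pk: "(p,k) \<in> set ?L" for p k
  proof -
    have tk: "0 < tau^k" using tau_pos by simp
    have h1: "p \<le> p + tau^k \<and> p + tau^k \<le> p + tau^k" using tk by simp
    have "f (p + tau^k) = f p + tau powi (g (p,k)) * (p + tau^k - p)"
      using gspec[OF pk] h1 by blast
    also have "tau powi (g (p,k)) * (p + tau^k - p) = tau powi (g (p,k) + int k)" by (simp add: powi_add)
    finally show ?thesis .
  qed
  have incr: "f p \<le> f (p + tau^k)" if pk: "(p,k) \<in> set ?L" for p k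
    using fend[OF pk] tau_pos by simp
  have nonneg: "0 \<le> g (p,k) + int k" if pk: "(p,k) \<in> set ?L" for p k
  proof (rule powi_ge)
    have "f 0 \<le> f p \<and> f (p + tau^k) \<le> f 1" by (rule chain_fbounds[OF cL incr pk])
    thus "tau powi (g (p,k) + int k) \<le> 1" using fend[OF pk] f0 f1 by simp
  qed
  define h where "h = (\<lambda>(p,k). nat (g (p,k) + int k))"
  have fh: "f (p + tau^k) = f p + tau^(h (p,k))" if pk: "(p,k) \<in> set ?L" for p k
  proof -
    have "tau powi (g (p,k) + int k) = tau ^ nat (g (p,k) + int k)"
      using nonneg[OF pk] by (simp add: power_int_def)
    thus ?thesis using fend[OF pk] unfolding h_def by simp
  qed
  define D where "D = map (\<lambda>(a,k). (f a, h (a,k))) ?L"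
  have cD: "chain 0 D 1" using chain_image[OF cL fh] f0 f1 unfolding D_def by simp
  have agD: "agree f ?L D"
    unfolding agree_def D_def list_all2_map2 list_all2_same
  proof
    fix x assume x: "x \<in> set ?L"
    obtain p k where xe: "x = (p,k)" by fastforce
    have e: "int (h (p,k)) - int k = g (p,k)" using nonneg[OF x[unfolded xe]] unfolding h_def by simp
    show "(case x of (p, k) \<Rightarrow> \<lambda>(q, m). \<forall>x. p \<le> x \<and> x \<le> p + tau ^ k \<longrightarrow> f x = q + tau powi (int m - int k) * (x - p))
          (case x of (a, k) \<Rightarrow> (f a, h (a, k)))"
      unfolding xe case_prod_conv e by (rule gspec[OF x[unfolded xe]])
  qed
  have lenD: "length D = length ?L" unfolding D_def by simp
  let ?P2 = "PtsC D 1"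
  have fin2: "finite ?P2" by (rule finite_PtsC)
  let ?lo2 = "Min (cj ` ?P2)" and ?hi2 = "Max (cj ` ?P2)"
  have w2: "\<And>y. y \<in> ?P2 \<Longrightarrow> ?lo2 \<le> cj y \<and> cj y \<le> ?hi2" using win_fin[OF fin2] by blast
  obtain ts where ts: "length ts = length D"
    "PtsC (BL D ts) 1 = {y \<in> Ztau. 0 \<le> y \<and> y \<le> 1 \<and> ?lo2 \<le> cj y \<and> cj y \<le> ?hi2}"
    using refine_chain[OF cD Ztau_0 w2] by blast
  have w20: "?lo2 \<le> cj 0 \<and> cj 0 \<le> ?hi2" using w2 chain_start[OF cD] by blast
  have w21: "?lo2 \<le> cj (0 + tau^0) \<and> cj (0 + tau^0) \<le> ?hi2" using w2 chain_end[of 1 D] by simp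
  obtain T2 where T2: "Pts T2 0 0 = {y \<in> Ztau. 0 \<le> y \<and> y \<le> 0 + tau^0 \<and> ?lo2 \<le> cj y \<and> cj y \<le> ?hi2}"
    using window_tree[OF Ztau_0] w20 w21 by blast
  have LT2: "LI T2 0 0 = BL D ts"
  proof (rule chain_unique[OF LI_chain01 chain_BL[OF cD ts(1)]])
    show "PtsC (LI T2 0 0) 1 = PtsC (BL D ts) 1" unfolding ts(2) Pts01[symmetric] T2 by simp
  qed
  let ?T1 = "subst T1' ts"
  have lts: "length ts = nleaves T1'" using ts(1) lenD by (simp add: LI_length)
  have LT1: "LI ?T1 0 0 = BL ?L ts" by (rule LI_subst[OF lts])
  have ag: "agree f (LI ?T1 0 0) (LI T2 0 0)" unfolding LT1 LT2
    by (rule agree_BL[OF agD]) (simp add: lts LI_length)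
  have nn: "nleaves ?T1 = nleaves T2" using agree_length[OF ag] by (simp add: LI_length)
  have "f = tree_pair ?T1 T2"
  proof (rule tp_char[OF nn])
    show "f x = x" if "x < 0 \<or> 1 < x" for x using out that by auto
    show "agree f (LI ?T1 0 0) (LI T2 0 0)" by (rule ag)
  qed
  thus ?thesis unfolding TPset_def using nn by blast
qed

theorem mainTheorem10:
  shows "generated (range xgen \<union> range ygen) = Ftau"
proof
  show "generated (range xgen \<union> range ygen) \<subseteq> Ftau"
  proof
    fix f assume "f \<in> generated (range xgen \<union> range ygen)"
    hence "f \<in> TPset" by (rule G_TP)
    then obtain T1 T2 where "nleaves T1 = nleaves T2" "f = tree_pair T1 T2" unfolding TPset_def by auto
    thus "f \<in> Ftau" using TP_Ftau by simp
  qed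
next
  show "Ftau \<subseteq> generated (range xgen \<union> range ygen)"
  proof
    fix f assume "f \<in> Ftau"
    hence "f \<in> TPset" by (rule Ftau_TP)
    then obtain T1 T2 where "nleaves T1 = nleaves T2" "f = tree_pair T1 T2" unfolding TPset_def by auto
    thus "f \<in> generated (range xgen \<union> range ygen)" using TP_G by simp
  qed
qed

end
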